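(* For every $n\geq 3$ we have $P_h(\ast_n)=\{2,3,4,\ldots\}\cup\{+\infty\}$.
   Context: For $n\geq 3$, the star graph $\ast_n$ is the topological graph with $n+1$ vertices $0,1,\ldots,n$ and $n$ edges $[0,1],[0,2],\ldots,[0,n]$, i.e. the union of $n$ arcs, the $i$-th having end points $0$ and $i$, any two of which meet only at the common end point $0$. For a topological space $A$, $Homeo(A)$ denotes the group of all homeomorphisms $A\to A$ under composition. For a subgroup $G$ of $Homeo(A)$ (acting by $gx=g(x)$), a nonempty subset $Y\subseteq A$ is invariant if $g(y)\in Y$ for all $g\in G$, $y\in Y$. The height of $(G,A)$ is $h(G,A)=\sup\{n\geq 0:$ there exist distinct closed invariant subsets $Y_0\subset Y_1\subset\cdots\subset Y_n=A\}$ (possibly $+\infty$). Finally $P_h(A)=\{h(G,A): G \text{ is a subgroup of } Homeo(A)\}$. *)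

theory Defs
  imports "HOL-Analysis.Analysis" "HOL-Library.Extended_Nat"
begin

definition star_graph :: "nat \<Rightarrow> complex set" where
  "star_graph n = (\<Union>k<n. closed_segment 0 (cis (2 * pi * real k / real n)))"

text \<open>Homeomorphisms of A, each represented canonically as a map that is the
  identity outside A.\<close>
definition Homeo :: "'a::topological_space set \<Rightarrow> ('a \<Rightarrow> 'a) set" where
  "Homeo A = {f. (\<exists>g. homeomorphism A A f g) \<and> (\<forall>x. x \<notin> A \<longrightarrow> f x = x)}"

definition homeo_inv :: "'a set \<Rightarrow> ('a \<Rightarrow> 'a) \<Rightarrow> ('a \<Rightarrow> 'a)" where
  "homeo_inv A f = (\<lambda>x. if x \<in> A then inv_into A f x else x)"

definition homeo_subgroup :: "'a::topological_space set \<Rightarrow> ('a \<Rightarrow> 'a) set \<Rightarrow> bool" where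
  "homeo_subgroup A G \<longleftrightarrow> G \<subseteq> Homeo A \<and> (\<lambda>x. x) \<in> G
     \<and> (\<forall>f\<in>G. \<forall>g\<in>G. f \<circ> g \<in> G) \<and> (\<forall>f\<in>G. homeo_inv A f \<in> G)"

definition invariant_set :: "('a \<Rightarrow> 'a) set \<Rightarrow> 'a set \<Rightarrow> bool" where
  "invariant_set G Y \<longleftrightarrow> Y \<noteq> {} \<and> (\<forall>g\<in>G. \<forall>y\<in>Y. g y \<in> Y)"

definition height :: "'a::topological_space set \<Rightarrow> ('a \<Rightarrow> 'a) set \<Rightarrow> enat" where
  "height A G = Sup {enat n | n. \<exists>Y :: nat \<Rightarrow> 'a set.
      (\<forall>i\<le>n. Y i \<subseteq> A \<and> closedin (top_of_set A) (Y i) \<and> invariant_set G (Y i))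
      \<and> (\<forall>i<n. Y i \<subset> Y (Suc i)) \<and> Y n = A}"

definition P_h :: "'a::topological_space set \<Rightarrow> enat set" where
  "P_h A = {height A G | G. homeo_subgroup A G}"

end

theory Submission
  imports Defs
begin

definition om :: "nat \<Rightarrow> complex" where "om n = cis (2 * pi / real n)"

lemma om_pow: "om n ^ k = cis (2*pi*real k / real n)"
proof -
  have "om n ^ k = cis (real k * (2*pi/real n))" by (simp only: om_def Complex.DeMoivre)
  also have "real k * (2*pi/real n) = 2*pi*real k / real n" by simp
  finally show ?thesis .
qed

lemma norm_om_pow [simp]: "cmod (om n ^ k) = 1"
  by (simp add: om_pow)

lemma om_pow_n: "n > 0 \<Longrightarrow> om n ^ n = 1"
  by (simp add: om_pow)

lemma om_pow_mod: "n > 0 \<Longrightarrow> om n ^ k = om n ^ (k mod n)"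
proof -
  assume n: "n > 0"
  have "om n ^ k = om n ^ (n * (k div n) + k mod n)" by simp
  also have "\<dots> = (om n ^ n) ^ (k div n) * om n ^ (k mod n)"
    by (simp only: power_add power_mult)
  finally show ?thesis using om_pow_n[OF n] by simp
qed

lemma om_pow_inj:
  assumes n: "n > 0" and j: "j < n" and k: "k < n" and e: "om n ^ j = om n ^ k"
  shows "j = k"
proof -
  have "exp (\<i> * complex_of_real (2*pi*real j / real n)) = exp (\<i> * complex_of_real (2*pi*real k / real n))"
    using e by (simp add: om_pow cis_conv_exp)
  then obtain N :: int where N: "\<i> * complex_of_real (2*pi*real j / real n) =
      \<i> * complex_of_real (2*pi*real k / real n) + (of_int (2 * N) * pi) * \<i>"
    by (auto simp: exp_eq)
  hence "2*pi*real j / real n = 2*pi*real k / real n + 2 * N * pi"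
    by (simp add: complex_eq_iff)
  hence "pi * (real j * 2) = pi * (real_of_int N * 2 * real n + real k * 2)" using n
    by (simp add: field_simps)
  hence "real j * 2 = real_of_int N * 2 * real n + real k * 2" by simp
  hence "real j = real k + N * real n" by simp
  hence "real_of_int (int j) = real_of_int (int k + N * int n)" by simp
  hence "int j = int k + N * int n" by (simp only: of_int_eq_iff)
  moreover have "N = 0"
  proof (rule ccontr)
    assume "N \<noteq> 0"
    hence "1 \<le> \<bar>N\<bar>" by linarith
    hence "\<bar>N\<bar> * int n \<ge> int n" using mult_right_mono[of 1 "\<bar>N\<bar>" "int n"] by simp
    hence "\<bar>N * int n\<bar> \<ge> int n" by (simp add: abs_mult)
    with \<open>int j = int k + N * int n\<close> j k show False by linarith
  qed
  ultimately show ?thesis by simp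
qed

definition arm :: "nat \<Rightarrow> nat \<Rightarrow> complex set" where
  "arm n k = closed_segment 0 (om n ^ k)"

lemma arm_eq: "arm n k = {complex_of_real t * om n ^ k | t. 0 \<le> t \<and> t \<le> 1}"
  by (auto simp: arm_def closed_segment_def scaleR_conv_of_real)

lemma star_eq: "star_graph n = (\<Union>k<n. arm n k)"
  by (simp add: star_graph_def arm_def om_pow)

lemma cmod_param [simp]: "0 \<le> t \<Longrightarrow> cmod (complex_of_real t * om n ^ k) = t"
  by (simp add: norm_mult)

lemma star_param:
  assumes "n > 0"
  shows "z \<in> star_graph n \<longleftrightarrow> (\<exists>t k. 0 \<le> t \<and> t \<le> 1 \<and> z = complex_of_real t * om n ^ k)"
proof
  assume "z \<in> star_graph n" thus "\<exists>t k. 0 \<le> t \<and> t \<le> 1 \<and> z = complex_of_real t * om n ^ k"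
    by (auto simp: star_eq arm_eq)
next
  assume "\<exists>t k. 0 \<le> t \<and> t \<le> 1 \<and> z = complex_of_real t * om n ^ k"
  then obtain t k where "0 \<le> t" "t \<le> 1" "z = complex_of_real t * om n ^ k" by blast
  thus "z \<in> star_graph n" using assms om_pow_mod[OF assms, of k]
    by (auto simp: star_eq arm_eq intro!: bexI[of _ "k mod n"])
qed

lemma param_in [intro]: "n > 0 \<Longrightarrow> 0 \<le> t \<Longrightarrow> t \<le> 1 \<Longrightarrow> complex_of_real t * om n ^ k \<in> star_graph n"
  using star_param by blast

lemma param_eq:
  assumes n: "n > 0" and t: "0 < t" "0 \<le> s" and e: "complex_of_real t * om n ^ j = complex_of_real s * om n ^ k"
  shows "t = s \<and> j mod n = k mod n"
proof -
  have ts: "t = s" using arg_cong[OF e, of cmod] t by simp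
  hence "om n ^ j = om n ^ k" using e t by simp
  hence "om n ^ (j mod n) = om n ^ (k mod n)" using om_pow_mod[OF n] by metis
  thus ?thesis using ts om_pow_inj[OF n] n by simp
qed


definition Ep :: "nat \<Rightarrow> complex set" where "Ep n = (\<lambda>k. om n ^ k) ` {..<n}"

lemma om_ne0 [simp]: "om n ^ k \<noteq> 0" "om n \<noteq> 0"
  using norm_om_pow[of n k] norm_om_pow[of n 1] by (metis norm_zero zero_neq_one, simp add: om_def)

lemma om_in_star [simp]: "n > 0 \<Longrightarrow> om n ^ k \<in> star_graph n"
  using param_in[of n 1 k] by simp

lemma zero_in_star [simp]: "n > 0 \<Longrightarrow> 0 \<in> star_graph n"
  using param_in[of n 0 0] by simp

lemma arm_closed [simp]: "closed (arm n k)" by (simp add: arm_def)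
lemma arm_zero [simp]: "0 \<in> arm n k" by (simp add: arm_def)
lemma arm_end [simp]: "om n ^ k \<in> arm n k" by (simp add: arm_def)

lemma arm_sub: "n > 0 \<Longrightarrow> arm n k \<subseteq> star_graph n"
  by (auto simp: arm_eq)

lemma arm_inter:
  assumes n: "n > 0" and jk: "j < n" "k < n" "j \<noteq> k" and z: "z \<in> arm n j" "z \<in> arm n k"
  shows "z = 0"
proof -
  obtain t where t: "0 \<le> t" "t \<le> 1" "z = complex_of_real t * om n ^ j"
    using z(1) by (auto simp: arm_eq)
  obtain s where s: "0 \<le> s" "s \<le> 1" "z = complex_of_real s * om n ^ k"
    using z(2) by (auto simp: arm_eq)
  show ?thesis
  proof (cases "t = 0")
    case True thus ?thesis using t by simp
  next
    case False
    hence "t = s \<and> j mod n = k mod n" using param_eq[OF n, of t s j k] t s by simp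
    thus ?thesis using jk by simp
  qed
qed

lemma Ep_not_arm:
  assumes n: "n > 0" and jk: "j < n" "k < n" "j \<noteq> k"
  shows "om n ^ k \<notin> arm n j"
proof
  assume "om n ^ k \<in> arm n j"
  hence "om n ^ k = 0" using arm_inter[OF n jk(1) jk(2) jk(3) _ arm_end] by blast
  thus False by simp
qed

lemma zero_notin_Ep: "0 \<notin> Ep n"
  by (auto simp: Ep_def)

lemma Ep_sub: "n > 0 \<Longrightarrow> Ep n \<subseteq> star_graph n"
  by (auto simp: Ep_def star_eq)

lemma arm_minus0: "arm n j - {0} = (\<lambda>t. complex_of_real t * om n ^ j) ` {0<..1}"
proof -
  have "om n ^ j \<noteq> 0" using norm_om_pow[of n j] by (metis norm_zero zero_neq_one)
  thus ?thesis by (auto simp: arm_eq image_iff)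
qed

lemma connected_arm_minus0: "connected (arm n j - {0})"
  unfolding arm_minus0
  by (rule connected_continuous_image) (auto intro!: continuous_intros)

lemma arm_minus_end: "arm n j - {om n ^ j} = (\<lambda>t. complex_of_real t * om n ^ j) ` {0..<1}"
proof -
  have ne: "om n ^ j \<noteq> 0" using norm_om_pow[of n j] by (metis norm_zero zero_neq_one)
  { fix t :: real assume "0 \<le> t" "t < 1"
    hence "complex_of_real t * om n ^ j \<noteq> om n ^ j" using ne
      by (metis cmod_param norm_om_pow order_less_irrefl) }
  moreover
  { fix t :: real assume "0 \<le> t" "t \<le> 1" "complex_of_real t * om n ^ j \<noteq> om n ^ j"
    hence "t < 1" by (cases "t = 1") auto }
  ultimately show ?thesis by (auto simp: arm_eq image_iff)
qed

lemma arms_disconnected: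
  assumes n: "n > 0" and J: "J \<subseteq> {..<n}" "j1 \<in> J" "j2 \<in> J" "j1 \<noteq> j2"
  shows "\<not> connected (\<Union>j\<in>J. arm n j - {0})"
proof -
  let ?s = "\<Union>j\<in>J. arm n j - {0}"
  let ?A = "arm n j1" and ?B = "\<Union>j\<in>J-{j1}. arm n j"
  have fin: "finite J" using J(1) finite_subset by blast
  have cA: "closed ?A" by simp
  have cB: "closed ?B" using fin by (intro closed_UN) auto
  have sub: "?s \<subseteq> ?A \<union> ?B" by auto
  have disj: "?A \<inter> ?B \<inter> ?s = {}"
  proof -
    { fix x assume x: "x \<in> ?A" "x \<in> ?B" "x \<in> ?s"
      then obtain j where j: "j \<in> J" "j \<noteq> j1" "x \<in> arm n j" by auto
      have "x = 0" using arm_inter[OF n _ _ j(2) j(3) x(1)] j J by auto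
      hence False using x(3) by auto }
    thus ?thesis by blast
  qed
  have ne0: "\<And>k. om n ^ k \<noteq> 0" using norm_om_pow by (metis norm_zero zero_neq_one)
  have a1: "om n ^ j1 \<in> ?s" using J(2) by (intro UN_I[of j1]) auto
  have a2: "om n ^ j2 \<in> ?s" using J(3) by (intro UN_I[of j2]) auto
  have a3: "om n ^ j2 \<in> ?B" using J(3,4) by (intro UN_I[of j2]) auto
  show ?thesis
  proof
    assume "connected ?s"
    have b1: "?A \<inter> ?s \<noteq> {}" using a1 arm_end[of n j1] by blast
    have b2: "?B \<inter> ?s \<noteq> {}" using a2 a3 by blast
    from connected_closedD[OF \<open>connected ?s\<close> disj sub cA cB] b1 b2 show False by blast
  qed
qed

lemma star_minus0: "n > 0 \<Longrightarrow> star_graph n - {0} = (\<Union>j\<in>{..<n}. arm n j - {0})"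
  by (auto simp: star_eq)

lemma star_minus0_disconnected: "n \<ge> 2 \<Longrightarrow> \<not> connected (star_graph n - {0})"
  using arms_disconnected[of n "{..<n}" 0 1] star_minus0[of n] by simp

lemma star_minus_end_connected:
  assumes n: "n > 0" and k: "k < n"
  shows "connected (star_graph n - {om n ^ k})"
proof -
  let ?F = "insert ((\<lambda>t. complex_of_real t * om n ^ k) ` {0..<1}) (arm n ` ({..<n} - {k}))"
  have eq: "star_graph n - {om n ^ k} = \<Union>?F"
  proof
    show "star_graph n - {om n ^ k} \<subseteq> \<Union>?F"
    proof
      fix z assume z: "z \<in> star_graph n - {om n ^ k}"
      then obtain j where j: "j < n" "z \<in> arm n j" by (auto simp: star_eq)
      show "z \<in> \<Union>?F"
      proof (cases "j = k")
        case True thus ?thesis using z j arm_minus_end[of n k] by auto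
      next
        case False thus ?thesis using j by auto
      qed
    qed
  next
    show "\<Union>?F \<subseteq> star_graph n - {om n ^ k}"
    proof
      fix z assume "z \<in> \<Union>?F"
      then consider "z \<in> arm n k - {om n ^ k}" | j where "j < n" "j \<noteq> k" "z \<in> arm n j"
        using arm_minus_end[of n k] by auto
      thus "z \<in> star_graph n - {om n ^ k}"
      proof cases
        case 1 thus ?thesis using k by (auto simp: star_eq)
      next
        case 2 thus ?thesis using Ep_not_arm[OF n 2(1) k 2(2)] by (auto simp: star_eq)
      qed
    qed
  qed
  have "connected (\<Union>?F)"
  proof (rule connected_Union)
    fix s assume "s \<in> ?F"
    thus "connected s"
      by (auto intro!: connected_continuous_image continuous_intros simp: arm_def)
  next
    have "0 \<in> \<Inter>?F" by (auto simp: image_iff intro!: bexI[of _ 0])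
    thus "\<Inter>?F \<noteq> {}" by blast
  qed
  thus ?thesis using eq by simp
qed

lemma nonend_param:
  assumes n: "n > 0" and p: "p \<in> star_graph n" "p \<noteq> 0" "p \<notin> Ep n"
  obtains r k where "0 < r" "r < 1" "k < n" "p = complex_of_real r * om n ^ k"
proof -
  obtain t k where t: "0 \<le> t" "t \<le> 1" "p = complex_of_real t * om n ^ k"
    using p star_param[OF n] by blast
  have "om n ^ k = om n ^ (k mod n)" using om_pow_mod[OF n] .
  have "t \<noteq> 0" using t p by auto
  moreover have "t \<noteq> 1"
  proof
    assume "t = 1"
    hence "p = om n ^ (k mod n)" using t om_pow_mod[OF n] by simp
    thus False using p(3) n by (auto simp: Ep_def)
  qed
  ultimately show ?thesis using that[of t "k mod n"] t om_pow_mod[OF n] n by simp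
qed

definition e1 :: "nat \<Rightarrow> real \<Rightarrow> nat \<Rightarrow> complex set" where
  "e1 n r k = arm n k \<inter> {z. r \<le> cmod z}"
definition e2 :: "nat \<Rightarrow> real \<Rightarrow> nat \<Rightarrow> complex set" where
  "e2 n r k = {z. cmod z \<le> r} \<union> (\<Union>j\<in>{..<n}-{k}. arm n j)"

lemma cut_facts:
  assumes n: "n > 0" and r: "0 < r" "r < 1" and k: "k < n" and p: "p = complex_of_real r * om n ^ k"
  shows "closed (e1 n r k)" "closed (e2 n r k)"
    "star_graph n - {p} \<subseteq> e1 n r k \<union> e2 n r k"
    "e1 n r k \<inter> e2 n r k \<inter> (star_graph n - {p}) = {}"
    "om n ^ k \<in> e1 n r k" "0 \<in> e2 n r k"
    "\<And>j. j < n \<Longrightarrow> om n ^ j \<in> e1 n r k \<Longrightarrow> j = k"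
    "connected (e2 n r k \<inter> (star_graph n - {p}))"
proof -
  show "closed (e1 n r k)" unfolding e1_def
    by (intro closed_Int arm_closed closed_Collect_le continuous_intros)
  show "closed (e2 n r k)" unfolding e2_def
    by (intro closed_Un closed_UN closed_Collect_le continuous_intros) auto
  show "star_graph n - {p} \<subseteq> e1 n r k \<union> e2 n r k"
  proof
    fix z assume z: "z \<in> star_graph n - {p}"
    then obtain j where j: "j < n" "z \<in> arm n j" by (auto simp: star_eq)
    show "z \<in> e1 n r k \<union> e2 n r k"
    proof (cases "j = k")
      case True
      thus ?thesis
      proof (cases "r \<le> cmod z")
        case True thus ?thesis using j \<open>j = k\<close> by (simp add: e1_def)
      next
        case False thus ?thesis by (simp add: e2_def)
      qed
    next
      case False
      hence "z \<in> (\<Union>j\<in>{..<n}-{k}. arm n j)" using j by blast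
      thus ?thesis by (simp add: e2_def)
    qed
  qed
  show "e1 n r k \<inter> e2 n r k \<inter> (star_graph n - {p}) = {}"
  proof -
   { fix z assume z: "z \<in> e1 n r k" "z \<in> e2 n r k" "z \<in> star_graph n" "z \<notin> {p}"
    obtain t where t: "0 \<le> t" "t \<le> 1" "z = complex_of_real t * om n ^ k"
      using z(1) by (auto simp: e1_def arm_eq)
    have tr: "r \<le> t" using z(1) t by (simp add: e1_def)
    from z(2) consider "cmod z \<le> r" | j where "j < n" "j \<noteq> k" "z \<in> arm n j"
      by (auto simp: e2_def)
    hence "z \<in> {}"
    proof cases
      case 1 hence "t = r" using t tr by simp
      thus ?thesis using z(4) t p by simp
    next
      case 2 hence "z = 0" using arm_inter[OF n 2(1) k 2(2) 2(3)] z(1) by (auto simp: e1_def)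
      moreover have "cmod z = t" using t by simp
      ultimately show ?thesis using tr r t by simp
    qed }
    thus ?thesis by blast
  qed
  show "om n ^ k \<in> e1 n r k" using r by (simp add: e1_def)
  show "0 \<in> e2 n r k" using r by (simp add: e2_def)
  show "\<And>j. j < n \<Longrightarrow> om n ^ j \<in> e1 n r k \<Longrightarrow> j = k"
  proof -
    fix j assume j: "j < n" "om n ^ j \<in> e1 n r k"
    show "j = k"
    proof (rule ccontr)
      assume "j \<noteq> k"
      hence "om n ^ j \<notin> arm n k" using Ep_not_arm[OF n k j(1)] by auto
      thus False using j(2) by (simp add: e1_def)
    qed
  qed
  let ?F = "insert ((\<lambda>t. complex_of_real t * om n ^ k) ` {0..<r}) (arm n ` ({..<n} - {k}))"
  have eq: "e2 n r k \<inter> (star_graph n - {p}) = \<Union>?F"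
  proof
    show "e2 n r k \<inter> (star_graph n - {p}) \<subseteq> \<Union>?F"
    proof
      fix z assume z: "z \<in> e2 n r k \<inter> (star_graph n - {p})"
      then obtain j where j: "j < n" "z \<in> arm n j" by (auto simp: star_eq)
      show "z \<in> \<Union>?F"
      proof (cases "j = k")
        case False thus ?thesis using j by auto
      next
        case True
        then obtain t where t: "0 \<le> t" "t \<le> 1" "z = complex_of_real t * om n ^ k"
          using j by (auto simp: arm_eq)
        have "t \<le> r"
        proof (rule ccontr)
          assume "\<not> t \<le> r"
          hence "z \<notin> {z. cmod z \<le> r}" using t by simp
          then obtain j' where "j' < n" "j' \<noteq> k" "z \<in> arm n j'" using z by (auto simp: e2_def)
          have zk: "z \<in> arm n k" using j True by simp
          have "z = 0" by (rule arm_inter[OF n \<open>j' < n\<close> k \<open>j' \<noteq> k\<close> \<open>z \<in> arm n j'\<close> zk])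
          thus False using t \<open>\<not> t \<le> r\<close> r by simp
        qed
        moreover have "t \<noteq> r" using z t p by auto
        ultimately show ?thesis using t by auto
      qed
    qed
  next
    show "\<Union>?F \<subseteq> e2 n r k \<inter> (star_graph n - {p})"
    proof
      fix z assume "z \<in> \<Union>?F"
      then consider t where "0 \<le> t" "t < r" "z = complex_of_real t * om n ^ k"
        | j where "j < n" "j \<noteq> k" "z \<in> arm n j"
        by auto
      thus "z \<in> e2 n r k \<inter> (star_graph n - {p})"
      proof cases
        case 1
        have "cmod z = t" using 1 by simp
        moreover have "cmod p = r" using p r by simp
        ultimately have "z \<noteq> p" using 1 by auto
        moreover have "z \<in> star_graph n" using 1 r n by auto
        moreover have "z \<in> e2 n r k" using 1 \<open>cmod z = t\<close> by (simp add: e2_def)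
        ultimately show ?thesis by blast
      next
        case 2
        have "z \<in> star_graph n" using 2 by (auto simp: star_eq)
        moreover have "z \<noteq> p"
        proof
          assume "z = p"
          have pk: "p \<in> arm n k" using p r by (auto simp: arm_eq)
          have "p = 0" by (rule arm_inter[OF n 2(1) k 2(2)]) (use 2(3) \<open>z = p\<close> pk in auto)
          thus False using p r by simp
        qed
        moreover have "z \<in> e2 n r k" using 2 by (auto simp: e2_def)
        ultimately show ?thesis by blast
      qed
    qed
  qed
  have "connected (\<Union>?F)"
  proof (rule connected_Union)
    fix s assume "s \<in> ?F"
    thus "connected s"
      by (auto intro!: connected_continuous_image continuous_intros simp: arm_def)
  next
    have "0 \<in> \<Inter>?F" using r by (auto simp: image_iff intro!: bexI[of _ 0])
    thus "\<Inter>?F \<noteq> {}" by blast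
  qed
  thus "connected (e2 n r k \<inter> (star_graph n - {p}))" using eq by simp
qed

lemma nonend_disconnected:
  assumes n: "n \<ge> 2" and p: "p \<in> star_graph n" "p \<notin> Ep n"
  shows "\<not> connected (star_graph n - {p})"
proof (cases "p = 0")
  case True thus ?thesis using star_minus0_disconnected[OF n] by simp
next
  case False
  have n0: "n > 0" using n by simp
  obtain r k where rk: "0 < r" "r < 1" "k < n" "p = complex_of_real r * om n ^ k"
    using nonend_param[OF n0 p(1) False p(2)] by blast
  note cf = cut_facts[OF n0 rk]
  have "om n ^ k \<in> e1 n r k \<inter> (star_graph n - {p})" using cf(5) p(2) rk(3) n0
    by (auto simp: Ep_def)
  moreover have "0 \<in> e2 n r k \<inter> (star_graph n - {p})" using cf(6) False n0 by (auto simp: star_eq)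
  ultimately show ?thesis using connected_closedD[OF _ cf(4) cf(3) cf(1) cf(2)] by blast
qed

lemma homeo_Ep:
  assumes n: "n \<ge> 2" and h: "homeomorphism (star_graph n) (star_graph n) f g" and x: "x \<in> Ep n"
  shows "f x \<in> Ep n"
proof (rule ccontr)
  let ?S = "star_graph n"
  have n0: "n > 0" using n by simp
  assume fx: "f x \<notin> Ep n"
  have xS: "x \<in> ?S" using x Ep_sub[OF n0] by blast
  have img: "f ` (?S - {x}) = ?S - {f x}"
  proof -
    have "f ` ?S = ?S" using homeomorphism_image1[OF h] .
    moreover have "inj_on f ?S" using h by (metis homeomorphism_apply1 inj_on_inverseI)
    ultimately show ?thesis using xS by (simp add: inj_on_image_set_diff)
  qed
  obtain k where k: "k < n" "x = om n ^ k" using x by (auto simp: Ep_def)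
  have "connected (?S - {x})" using star_minus_end_connected[OF n0 k(1)] k by simp
  hence "connected (f ` (?S - {x}))"
    by (rule connected_continuous_image[rotated])
       (rule continuous_on_subset[OF homeomorphism_cont1[OF h]], blast)
  moreover have "f x \<in> ?S" using homeomorphism_image1[OF h] xS by blast
  ultimately show False using nonend_disconnected[OF n _ fx] img by simp
qed

lemma homeo_fix0:
  assumes n: "n \<ge> 3" and h: "homeomorphism (star_graph n) (star_graph n) f g"
  shows "f 0 = 0"
proof (rule ccontr)
  let ?S = "star_graph n"
  have n0: "n > 0" and n2: "n \<ge> 2" using n by auto
  have g: "homeomorphism ?S ?S g f" using homeomorphism_sym h by blast
  assume p0: "f 0 \<noteq> 0"
  define p where "p = f 0"
  have S0: "0 \<in> ?S" using n0 by (auto simp: star_eq)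
  have pS: "p \<in> ?S" using homeomorphism_image1[OF h] S0 p_def by blast
  have gp: "g p = 0" using homeomorphism_apply1[OF h S0] p_def by simp
  have pE: "p \<notin> Ep n"
  proof
    assume "p \<in> Ep n" hence "g p \<in> Ep n" using homeo_Ep[OF n2 g] by blast
    thus False using gp zero_notin_Ep by simp
  qed
  obtain r k where rk: "0 < r" "r < 1" "k < n" "p = complex_of_real r * om n ^ k"
    using nonend_param[OF n0 pS] p0 pE p_def by blast
  note cf = cut_facts[OF n0 rk]
  have injf: "inj_on f ?S" using h by (metis homeomorphism_apply1 inj_on_inverseI)
  have cf1: "continuous_on ?S f" using homeomorphism_cont1[OF h] .
  have cg: "continuous_on ?S g" using homeomorphism_cont2[OF h] .
  have "g (om n ^ k) \<in> Ep n" using homeo_Ep[OF n2 g] rk(3) by (auto simp: Ep_def)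
  then obtain j0 where j0: "j0 < n" "g (om n ^ k) = om n ^ j0" by (auto simp: Ep_def)
  have fj0: "f (om n ^ j0) = om n ^ k"
    using j0 homeomorphism_apply2[OF h om_in_star[OF n0, of k]] by simp
  define C where "C j = f ` (arm n j - {0})" for j
  have Csub: "C j \<subseteq> ?S - {p}" if "j < n" for j
  proof
    fix y assume "y \<in> C j"
    then obtain x where x: "x \<in> arm n j" "x \<noteq> 0" "y = f x" by (auto simp: C_def)
    have xS: "x \<in> ?S" using x that by (auto simp: star_eq)
    have "y \<in> ?S" using homeomorphism_image1[OF h] xS x by blast
    moreover have "y \<noteq> p" using injf xS S0 x p_def by (metis inj_on_def)
    ultimately show "y \<in> ?S - {p}" by simp
  qed
  have Cconn: "connected (C j)" if "j < n" for j
    unfolding C_def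
    by (rule connected_continuous_image[OF continuous_on_subset[OF cf1] connected_arm_minus0])
       (use arm_sub[OF n0, of j] in blast)
  have Csplit: "C j \<inter> e1 n r k = {} \<or> C j \<inter> e2 n r k = {}" if "j < n" for j
  proof -
    have A: "e1 n r k \<inter> e2 n r k \<inter> C j = {}" using cf(4) Csub[OF that] by blast
    have B: "C j \<subseteq> e1 n r k \<union> e2 n r k" using cf(3) Csub[OF that] by blast
    have "e1 n r k \<inter> C j = {} \<or> e2 n r k \<inter> C j = {}"
      by (rule connected_closedD[OF Cconn[OF that] A B cf(1) cf(2)])
    thus ?thesis by blast
  qed
  have ne0: "\<And>k. om n ^ k \<noteq> 0" using norm_om_pow by (metis norm_zero zero_neq_one)
  have fend: "f (om n ^ j) \<in> C j" for j unfolding C_def by (rule imageI) simp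
  have Cj0: "C j0 \<inter> e2 n r k = {}"
  proof -
    have "om n ^ k \<in> C j0" using fend[of j0] fj0 by simp
    hence "C j0 \<inter> e1 n r k \<noteq> {}" using cf(5) by blast
    thus ?thesis using Csplit[OF j0(1)] by blast
  qed
  have Cj: "C j \<inter> e1 n r k = {}" if "j < n" "j \<noteq> j0" for j
  proof -
    have "f (om n ^ j) \<in> Ep n" using homeo_Ep[OF n2 h] that by (auto simp: Ep_def)
    then obtain j' where j': "j' < n" "f (om n ^ j) = om n ^ j'" by (auto simp: Ep_def)
    have "j' \<noteq> k"
    proof
      assume "j' = k"
      hence "f (om n ^ j) = f (om n ^ j0)" using j' fj0 by simp
      hence "om n ^ j = om n ^ j0" by (rule inj_onD[OF injf]) (use n0 in simp_all)
      thus False using om_pow_inj[OF n0 that(1) j0(1)] that by simp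
    qed
    have "f (om n ^ j) \<notin> e1 n r k"
    proof
      assume "f (om n ^ j) \<in> e1 n r k"
      hence "om n ^ j' \<in> e1 n r k" using j' by simp
      hence "j' = k" by (rule cf(7)[OF j'(1)])
      thus False using \<open>j' \<noteq> k\<close> by simp
    qed
    moreover have "f (om n ^ j) \<in> e1 n r k \<union> e2 n r k" using cf(3) Csub[OF that(1)] fend[of j] by blast
    ultimately have "f (om n ^ j) \<in> e2 n r k" by blast
    hence "C j \<inter> e2 n r k \<noteq> {}" using fend[of j] by blast
    thus ?thesis using Csplit[OF that(1)] by blast
  qed
  define T where "T = e2 n r k \<inter> (?S - {p})"
  have gT: "g ` T = (\<Union>j\<in>{..<n}-{j0}. arm n j - {0})"
  proof
    show "g ` T \<subseteq> (\<Union>j\<in>{..<n}-{j0}. arm n j - {0})"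
    proof
      fix x assume "x \<in> g ` T"
      then obtain y where y: "y \<in> T" "x = g y" by blast
      have yS: "y \<in> ?S" "y \<noteq> p" using y by (auto simp: T_def)
      have xS: "x \<in> ?S" using homeomorphism_image2[OF h] yS y by blast
      have fx: "f x = y" using homeomorphism_apply2[OF h yS(1)] y by simp
      have "x \<noteq> 0" using fx yS p_def by auto
      then obtain j where j: "j < n" "x \<in> arm n j" using xS by (auto simp: star_eq)
      have "j \<noteq> j0"
      proof
        assume "j = j0"
        hence "y \<in> C j0" using fx j \<open>x \<noteq> 0\<close> by (auto simp: C_def)
        thus False using Cj0 y by (auto simp: T_def)
      qed
      thus "x \<in> (\<Union>j\<in>{..<n}-{j0}. arm n j - {0})" using j \<open>x \<noteq> 0\<close> by auto
    qed
  next
    show "(\<Union>j\<in>{..<n}-{j0}. arm n j - {0}) \<subseteq> g ` T"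
    proof
      fix x assume "x \<in> (\<Union>j\<in>{..<n}-{j0}. arm n j - {0})"
      then obtain j where j: "j < n" "j \<noteq> j0" "x \<in> arm n j" "x \<noteq> 0" by auto
      have xS: "x \<in> ?S" using j by (auto simp: star_eq)
      have fxC: "f x \<in> C j" using j by (auto simp: C_def)
      hence "f x \<in> ?S - {p}" using Csub[OF j(1)] by blast
      moreover hence "f x \<in> e2 n r k" using cf(3) Cj[OF j(1,2)] fxC by blast
      ultimately have "f x \<in> T" by (simp add: T_def)
      moreover have "g (f x) = x" using homeomorphism_apply1[OF h xS] .
      ultimately show "x \<in> g ` T" by (metis image_eqI)
    qed
  qed
  have "connected (g ` T)"
    by (rule connected_continuous_image[OF continuous_on_subset[OF cg] cf(8)[folded T_def]])
       (auto simp: T_def)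
  moreover
  obtain j1 j2 where "j1 \<in> {..<n}-{j0}" "j2 \<in> {..<n}-{j0}" "j1 \<noteq> j2"
  proof (cases "j0 = 0")
    case True thus ?thesis using that[of 1 2] n by auto
  next
    case False
    show ?thesis
    proof (cases "j0 = 1")
      case True thus ?thesis using that[of 0 2] n by auto
    next
      case False thus ?thesis using that[of 0 1] n \<open>j0 \<noteq> 0\<close> by auto
    qed
  qed
  ultimately show False using arms_disconnected[OF n0, of "{..<n}-{j0}" j1 j2] gT by auto
qed


definition chainP :: "'a::topological_space set \<Rightarrow> ('a \<Rightarrow> 'a) set \<Rightarrow> nat \<Rightarrow> bool" where
  "chainP A G N \<longleftrightarrow> (\<exists>Y :: nat \<Rightarrow> 'a set.
      (\<forall>i\<le>N. Y i \<subseteq> A \<and> closedin (top_of_set A) (Y i) \<and> invariant_set G (Y i))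
      \<and> (\<forall>i<N. Y i \<subset> Y (Suc i)) \<and> Y N = A)"

lemma height_chainP: "height A G = Sup {enat N | N. chainP A G N}"
  unfolding height_def chainP_def by simp

lemma height_ge: "chainP A G N \<Longrightarrow> enat N \<le> height A G"
  unfolding height_chainP by (rule Sup_upper) blast

lemma height_le: "(\<And>N. chainP A G N \<Longrightarrow> N \<le> K) \<Longrightarrow> height A G \<le> enat K"
  unfolding height_chainP by (rule Sup_least) auto

lemma height_eq: "chainP A G K \<Longrightarrow> (\<And>N. chainP A G N \<Longrightarrow> N \<le> K) \<Longrightarrow> height A G = enat K"
  using height_ge height_le by (metis antisym)

lemma height_inf: "(\<And>N. N \<ge> 1 \<Longrightarrow> chainP A G N) \<Longrightarrow> height A G = \<infinity>"
proof (rule ccontr)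
  assume ch: "\<And>N. N \<ge> 1 \<Longrightarrow> chainP A G N" and ne: "height A G \<noteq> \<infinity>"
  then obtain k where k: "height A G = enat k" by (cases "height A G") auto
  have "enat (Suc k) \<le> height A G" by (rule height_ge[OF ch]) simp
  thus False using k by simp
qed

lemma closedin_finite: "finite S \<Longrightarrow> S \<subseteq> A \<Longrightarrow> closedin (top_of_set A) (S :: 'a::t1_space set)"
  by (simp add: closed_subset finite_imp_closed)

lemma height_ge2:
  assumes n: "n \<ge> 3" and G: "homeo_subgroup (star_graph n) G"
  shows "enat 2 \<le> height (star_graph n) G"
proof (rule height_ge)
  let ?A = "star_graph n"
  have n0: "n > 0" using n by simp
  define Y where "Y i = (if i = 0 then {0} else if i = 1 then insert 0 (Ep n) else ?A)" for i :: nat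
  have finE: "finite (Ep n)" by (simp add: Ep_def)
  have EA: "Ep n \<subseteq> ?A" using Ep_sub[OF n0] .
  have inv: "g x \<in> Y i" if g: "g \<in> G" and x: "x \<in> Y i" for g x i
  proof -
    have "g \<in> Homeo ?A" using G g by (auto simp: homeo_subgroup_def)
    then obtain g' where h: "homeomorphism ?A ?A g g'" by (auto simp: Homeo_def)
    have g0: "g 0 = 0" by (rule homeo_fix0[OF n h])
    have gE: "y \<in> Ep n \<Longrightarrow> g y \<in> Ep n" for y using homeo_Ep[OF _ h] n by simp
    have gA: "y \<in> ?A \<Longrightarrow> g y \<in> ?A" for y using homeomorphism_image1[OF h] by blast
    show ?thesis using x g0 gE gA by (auto simp: Y_def split: if_splits)
  qed
  show "chainP ?A G 2" unfolding chainP_def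
  proof (intro exI[of _ Y] conjI allI impI)
    fix i assume "i \<le> (2::nat)"
    show "Y i \<subseteq> ?A" using EA n0 by (auto simp: Y_def)
    show "closedin (top_of_set ?A) (Y i)"
      using EA n0 finE by (auto simp: Y_def intro!: closedin_finite)
    show "invariant_set G (Y i)" unfolding invariant_set_def
      using inv zero_in_star[OF n0] by (auto simp: Y_def)
  next
    fix i assume "i < (2::nat)"
    hence "i = 0 \<or> i = 1" by auto
    moreover have "Y 0 \<subset> Y 1"
    proof -
      have "1 \<in> Ep n" using n0 by (auto simp: Ep_def image_iff intro!: bexI[of _ 0])
      thus ?thesis by (auto simp: Y_def)
    qed
    moreover have "Y 1 \<subset> Y 2"
    proof -
      have hA: "complex_of_real (1/2) * om n ^ 0 \<in> ?A" using n0 by (intro param_in) auto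
      have "complex_of_real (1/2) \<notin> Ep n"
      proof
        assume "complex_of_real (1/2) \<in> Ep n"
        then obtain k where "complex_of_real (1/2) = om n ^ k" by (auto simp: Ep_def)
        hence "cmod (complex_of_real (1/2)) = cmod (om n ^ k)" by (rule arg_cong)
        thus False by (simp only: norm_om_pow norm_of_real)
      qed
      moreover have "complex_of_real (1/2) \<noteq> 0" by simp
      ultimately have "complex_of_real (1/2) \<notin> Y 1" by (simp add: Y_def)
      moreover have "complex_of_real (1/2) \<in> Y 2" using hA by (simp add: Y_def)
      moreover have "Y 1 \<subseteq> Y 2" using EA zero_in_star[OF n0] by (simp add: Y_def)
      ultimately show ?thesis by blast
    qed
    ultimately show "Y i \<subset> Y (Suc i)" by (auto simp: numeral_2_eq_2)
  next
    show "Y 2 = ?A" by (simp add: Y_def)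
  qed
qed

lemma trivial_subgroup: "homeo_subgroup A {\<lambda>x. x}"
proof -
  have "(\<lambda>x. x) \<in> Homeo A" by (auto simp: Homeo_def intro!: exI[of _ "\<lambda>x. x"] homeomorphism_ident)
  moreover have "homeo_inv A (\<lambda>x. x) = (\<lambda>x. x)"
    by (auto simp: homeo_inv_def fun_eq_iff inv_into_f_f[OF inj_on_id2])
  ultimately show ?thesis by (auto simp: homeo_subgroup_def comp_def)
qed

lemma trivial_height:
  assumes n: "n \<ge> 3"
  shows "height (star_graph n) {\<lambda>x. x} = \<infinity>"
proof (rule height_inf)
  let ?A = "star_graph n"
  have n0: "n > 0" using n by simp
  fix N :: nat assume N: "N \<ge> 1"
  define q where "q j = complex_of_real (1 / (real j + 2))" for j :: nat
  have qA: "q j \<in> ?A" for j using param_in[OF n0, of "1 / (real j + 2)" 0] by (simp add: q_def)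
  have qinj: "q i = q j \<Longrightarrow> i = j" for i j by (simp add: q_def)
  have q0: "q j \<noteq> 0" for j unfolding q_def by (simp only: of_real_eq_0_iff) simp
  define Y where "Y i = (if i < N then q ` {..i} else ?A)" for i
  show "chainP ?A {\<lambda>x. x} N" unfolding chainP_def
  proof (intro exI[of _ Y] conjI allI impI)
    fix i assume "i \<le> N"
    show "Y i \<subseteq> ?A" using qA by (auto simp: Y_def)
    show "closedin (top_of_set ?A) (Y i)"
      using qA by (auto simp: Y_def intro!: closedin_finite)
    show "invariant_set {\<lambda>x. x} (Y i)" using zero_in_star[OF n0] by (auto simp: invariant_set_def Y_def)
  next
    fix i assume i: "i < N"
    show "Y i \<subset> Y (Suc i)"
    proof (cases "Suc i < N")
      case True
      have "q (Suc i) \<notin> q ` {..i}" using qinj by force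
      thus ?thesis using True i by (auto simp: Y_def)
    next
      case False
      have "0 \<notin> q ` {..i}" using q0 by force
      moreover have "0 \<in> ?A" using n0 by simp
      ultimately show ?thesis using False i qA by (auto simp: Y_def)
    qed
  next
    show "Y N = ?A" by (simp add: Y_def)
  qed
qed


section \<open>One-dimensional groups\<close>

definition PhiC :: "real set \<Rightarrow> real set \<Rightarrow> (real \<Rightarrow> real) \<Rightarrow> bool" where
  "PhiC C D \<phi> \<longleftrightarrow> continuous_on {0..1} \<phi> \<and> strict_mono_on {0..1} \<phi> \<and> \<phi> ` {0..1} = {0..1}
     \<and> (\<forall>c\<in>C. \<phi> c = c) \<and> (\<forall>x\<in>{0..1}. \<phi> x \<in> D \<longleftrightarrow> x \<in> D)"

lemma PhiC_id: "PhiC C D (\<lambda>x. x)"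
  by (auto simp: PhiC_def strict_mono_on_def)

lemma PhiC_range: "PhiC C D \<phi> \<Longrightarrow> x \<in> {0..1} \<Longrightarrow> \<phi> x \<in> {0..1}"
  by (auto simp: PhiC_def)

lemma PhiC_comp:
  assumes f: "PhiC C D f" and g: "PhiC C D g"
  shows "PhiC C D (f \<circ> g)"
proof -
  have gi: "g ` {0..1} = {0..1}" using g by (simp add: PhiC_def)
  have "continuous_on {0..1} (f \<circ> g)"
    using f g by (intro continuous_on_compose) (auto simp: PhiC_def)
  moreover have "strict_mono_on {0..1} (f \<circ> g)"
    using f g PhiC_range[OF g] unfolding PhiC_def strict_mono_on_def by auto
  moreover have "(f \<circ> g) ` {0..1} = {0..1}"
  proof -
    have "(f \<circ> g) ` {0..1} = f ` (g ` {0..1})" by (rule image_comp[symmetric])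
    thus ?thesis using f gi by (simp add: PhiC_def)
  qed
  moreover have "\<forall>c\<in>C. (f \<circ> g) c = c" using f g by (simp add: PhiC_def)
  moreover have "\<forall>x\<in>{0..1}. (f \<circ> g) x \<in> D \<longleftrightarrow> x \<in> D"
    using f g PhiC_range[OF g] unfolding PhiC_def by auto
  ultimately show ?thesis by (simp add: PhiC_def)
qed

lemma PhiC_inj: "PhiC C D f \<Longrightarrow> inj_on f {0..1}"
  by (auto simp: PhiC_def intro: strict_mono_on_imp_inj_on)

lemma PhiC_mono: "PhiC C D f \<Longrightarrow> x \<in> {0..1} \<Longrightarrow> y \<in> {0..1} \<Longrightarrow> x \<le> y \<Longrightarrow> f x \<le> f y"
proof -
  assume f: "PhiC C D f" and xy: "x \<in> {0..1}" "y \<in> {0..1}" "x \<le> y"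
  have sm: "strict_mono_on {0..1} f" using f by (simp add: PhiC_def)
  show "f x \<le> f y"
  proof (cases "x = y")
    case False hence "x < y" using xy by simp
    thus ?thesis using strict_mono_onD[OF sm xy(1,2)] by simp
  qed simp
qed

lemma PhiC_inv:
  assumes f: "PhiC C D f" and C: "C \<subseteq> {0..1}"
  shows "PhiC C D (inv_into {0..1} f)"
proof -
  let ?g = "inv_into {0..1} f"
  have inj: "inj_on f {0..1}" using PhiC_inj[OF f] .
  have im: "f ` {0..1} = {0..1}" using f by (simp add: PhiC_def)
  have gf: "x \<in> {0..1} \<Longrightarrow> ?g (f x) = x" for x using inv_into_f_f[OF inj] by blast
  have fg: "y \<in> {0..1} \<Longrightarrow> f (?g y) = y" for y using f_inv_into_f[of y f "{0..1}"] im by simp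
  have gr: "y \<in> {0..1} \<Longrightarrow> ?g y \<in> {0..1}" for y using inv_into_into[of y f "{0..1}"] im by simp
  have "continuous_on (f ` {0..1}) ?g"
    by (rule continuous_on_inv) (use f gf in \<open>auto simp: PhiC_def\<close>)
  hence "continuous_on {0..1} ?g" using im by simp
  moreover have "strict_mono_on {0..1} ?g"
  proof (rule strict_mono_onI)
    fix r s :: real assume rs: "r \<in> {0..1}" "s \<in> {0..1}" "r < s"
    show "?g r < ?g s"
    proof (rule ccontr)
      assume "\<not> ?g r < ?g s"
      hence "?g s \<le> ?g r" by simp
      hence "f (?g s) \<le> f (?g r)" using PhiC_mono[OF f gr gr] rs by simp
      thus False using fg rs by simp
    qed
  qed
  moreover have "?g ` {0..1} = {0..1}"
  proof
    show "?g ` {0..1} \<subseteq> {0..1}" using gr by blast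
    show "{0..1} \<subseteq> ?g ` {0..1}"
    proof
      fix x :: real assume "x \<in> {0..1}"
      hence "?g (f x) = x" "f x \<in> {0..1}" using gf PhiC_range[OF f] by auto
      thus "x \<in> ?g ` {0..1}" by (metis image_eqI)
    qed
  qed
  moreover have "\<forall>c\<in>C. ?g c = c"
  proof
    fix c assume c: "c \<in> C"
    hence "f c = c" "c \<in> {0..1}" using f C by (auto simp: PhiC_def)
    thus "?g c = c" using gf[of c] by simp
  qed
  moreover have "\<forall>x\<in>{0..1}. ?g x \<in> D \<longleftrightarrow> x \<in> D"
  proof
    fix x :: real assume x: "x \<in> {0..1}"
    have "f (?g x) \<in> D \<longleftrightarrow> ?g x \<in> D" using f gr[OF x] by (simp add: PhiC_def)
    thus "?g x \<in> D \<longleftrightarrow> x \<in> D" using fg[OF x] by simp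
  qed
  ultimately show ?thesis by (simp add: PhiC_def)
qed

lemma PhiC_inv_eq:
  assumes f: "PhiC C D f" and x: "x \<in> {0..1}"
  shows "inv_into {0..1} f (f x) = x" "f (inv_into {0..1} f x) = x"
proof -
  have inj: "inj_on f {0..1}" using PhiC_inj[OF f] .
  have im: "f ` {0..1} = {0..1}" using f by (simp add: PhiC_def)
  show "inv_into {0..1} f (f x) = x" using inv_into_f_f[OF inj x] .
  show "f (inv_into {0..1} f x) = x" using f_inv_into_f[of x f "{0..1}"] im x by simp
qed


section \<open>Moebius maps of the unit interval\<close>

definition mob :: "real \<Rightarrow> real \<Rightarrow> real" where
  "mob l u = l * u / (1 + (l - 1) * u)"

lemma mob_den_pos: "(l::real) > 0 \<Longrightarrow> u \<in> {0..1} \<Longrightarrow> 1 + (l - 1) * u > 0"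
proof -
  assume l: "l > 0" and u: "u \<in> {0..1}"
  have "1 + (l - 1) * u = (1 - u) + l * u" by (simp add: algebra_simps)
  moreover have "(1 - u) + l * u > 0"
  proof (cases "u = 0")
    case True thus ?thesis by simp
  next
    case False hence "l * u > 0" using l u by simp
    thus ?thesis using u by simp
  qed
  ultimately show ?thesis by simp
qed

lemma mob_0 [simp]: "mob l 0 = 0" and mob_1 [simp]: "l > 0 \<Longrightarrow> mob l 1 = 1"
  by (simp_all add: mob_def)

lemma mob_comp: "l > 0 \<Longrightarrow> k > 0 \<Longrightarrow> u \<in> {0..1} \<Longrightarrow> mob l (mob k u) = mob (l * k) u"
proof -
  assume l: "l > 0" and k: "k > 0" and u: "u \<in> {0..1}"
  have d: "1 + (k - 1) * u > 0" using mob_den_pos[OF k u] .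
  define d where "d = 1 + (k - 1) * u"
  have d2: "1 + (l * k - 1) * u > 0" using mob_den_pos[of "l*k" u] l k u by simp
  have e1: "1 + (l - 1) * (k * u / d) = (d + (l - 1) * k * u) / d"
    using d by (simp add: d_def add_divide_distrib)
  have e2: "d + (l - 1) * k * u = 1 + (l * k - 1) * u" by (simp add: d_def algebra_simps)
  have mk: "mob k u = k * u / d" by (simp add: mob_def d_def)
  have "mob l (mob k u) = l * mob k u / (1 + (l - 1) * mob k u)" by (rule mob_def)
  also have "\<dots> = l * (k * u / d) / (1 + (l - 1) * (k * u / d))" by (simp only: mk)
  also have "\<dots> = l * (k * u / d) / ((d + (l - 1) * k * u) / d)" by (simp only: e1)
  also have "\<dots> = l * (k * u / d) / ((1 + (l * k - 1) * u) / d)" by (simp only: e2)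
  also have "\<dots> = (l * k) * u / (1 + (l * k - 1) * u)" using d by (simp add: d_def)
  finally show ?thesis by (simp add: mob_def)
qed

lemma frac_lt: "(b::real) > 0 \<Longrightarrow> d > 0 \<Longrightarrow> a * d < c * b \<Longrightarrow> a / b < c / d"
  by (simp add: field_simps)

lemma mob_strict: "l > 0 \<Longrightarrow> u \<in> {0..1} \<Longrightarrow> v \<in> {0..1} \<Longrightarrow> u < v \<Longrightarrow> mob l u < mob l v"
proof -
  assume l: "l > 0" and u: "u \<in> {0..1}" and v: "v \<in> {0..1}" and uv: "u < v"
  have du: "1 + (l - 1) * u > 0" and dv: "1 + (l - 1) * v > 0" using mob_den_pos l u v by auto
  have "l * u * (1 + (l - 1) * v) < l * v * (1 + (l - 1) * u)"
  proof -
    have "l * v * (1 + (l - 1) * u) - l * u * (1 + (l - 1) * v) = l * (v - u)" by (simp add: algebra_simps)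
    moreover have "l * (v - u) > 0" using l uv by simp
    ultimately show ?thesis by linarith
  qed
  thus ?thesis unfolding mob_def by (rule frac_lt[OF du dv])
qed

lemma mob_range: "l > 0 \<Longrightarrow> u \<in> {0..1} \<Longrightarrow> mob l u \<in> {0..1}"
proof -
  assume l: "l > 0" and u: "u \<in> {0..1}"
  have a: "mob l 0 \<le> mob l u"
  proof (cases "u = 0")
    case False thus ?thesis using mob_strict[OF l, of 0 u] u by simp
  qed simp
  have b: "mob l u \<le> mob l 1"
  proof (cases "u = 1")
    case False thus ?thesis using mob_strict[OF l, of u 1] u by simp
  qed simp
  show ?thesis using a b l by simp
qed

lemma mob_cont: "l > 0 \<Longrightarrow> continuous_on {0..1} (mob l)"
  unfolding mob_def
  by (intro continuous_intros) (use mob_den_pos in force)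

lemma mob_image: "l > 0 \<Longrightarrow> mob l ` {0..1} = {0..1}"
proof
  assume l: "l > 0"
  show "mob l ` {0..1} \<subseteq> {0..1}" using mob_range[OF l] by blast
  show "{0..1} \<subseteq> mob l ` {0..1}"
  proof
    fix v :: real assume v: "v \<in> {0..1}"
    have "mob l (mob (1/l) v) = v" using mob_comp[of l "1/l" v] l v by (simp add: mob_def)
    moreover have "mob (1/l) v \<in> {0..1}" using mob_range[of "1/l" v] l v by simp
    ultimately show "v \<in> mob l ` {0..1}" by (metis image_eqI)
  qed
qed

lemma mob_odds: "l > 0 \<Longrightarrow> u \<in> {0..<1} \<Longrightarrow> mob l u / (1 - mob l u) = l * (u / (1 - u))"
proof -
  assume l: "l > 0" and u: "u \<in> {0..<1}"
  define d where "d = 1 + (l - 1) * u"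
  have d: "d > 0" using mob_den_pos[OF l] u by (simp add: d_def)
  have m: "mob l u = l * u / d" by (simp add: mob_def d_def)
  have "1 - l * u / d = (d - l * u) / d" using d by (simp add: diff_divide_distrib)
  also have "d - l * u = 1 - u" by (simp add: d_def algebra_simps)
  finally have m1: "1 - mob l u = (1 - u) / d" using m by simp
  have "mob l u / (1 - mob l u) = (l * u / d) / ((1 - u) / d)" using m m1 by simp
  also have "\<dots> = l * u / (1 - u)" using d by simp
  finally show ?thesis by simp
qed

lemma mob_hit: "u \<in> {0<..<1} \<Longrightarrow> v \<in> {0<..<1} \<Longrightarrow>
   mob ((v / (1 - v)) / (u / (1 - u))) u = v \<and> (v / (1 - v)) / (u / (1 - u)) > 0"
proof -
  assume u: "u \<in> {0<..<1}" and v: "v \<in> {0<..<1}"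
  define l where "l = (v / (1 - v)) / (u / (1 - u))"
  have pos: "1 - u > 0" "1 - v > 0" "u > 0" "v > 0" using u v by auto
  have l: "l > 0" using pos by (simp add: l_def)
  have "mob l u / (1 - mob l u) = v / (1 - v)"
    using mob_odds[OF l, of u] u pos by (simp add: l_def)
  moreover have "mob l u < 1" using mob_strict[OF l, of u 1] u l by simp
  ultimately have "mob l u = v"
  proof -
    assume e: "mob l u / (1 - mob l u) = v / (1 - v)" and lt: "mob l u < 1"
    have "mob l u * (1 - v) = v * (1 - mob l u)" using e lt pos
      by (simp add: divide_eq_eq eq_divide_eq)
    thus ?thesis by (simp add: algebra_simps)
  qed
  thus ?thesis using l by (simp add: l_def)
qed


definition HH :: "(real \<Rightarrow> real) \<Rightarrow> bool" where
  "HH h \<longleftrightarrow> continuous_on {0..1} h \<and> strict_mono_on {0..1} h \<and> h ` {0..1} = {0..1} \<and> h 0 = 0 \<and> h 1 = 1"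

lemma HH_mob: "l > 0 \<Longrightarrow> HH (mob l)"
  unfolding HH_def using mob_cont mob_image mob_strict
  by (auto intro!: strict_mono_onI)

definition glue :: "real \<Rightarrow> real \<Rightarrow> (real \<Rightarrow> real) \<Rightarrow> real \<Rightarrow> real" where
  "glue c d h z = (if c \<le> z \<and> z \<le> d then c + (d - c) * h ((z - c) / (d - c)) else z)"

locale glue_loc =
  fixes c d :: real and h :: "real \<Rightarrow> real"
  assumes cd: "0 \<le> c" "c < d" "d \<le> 1" and hh: "HH h"
begin

lemma h01: "u \<in> {0..1} \<Longrightarrow> h u \<in> {0..1}"
  using hh by (auto simp: HH_def)

lemma h_strict: "u \<in> {0..1} \<Longrightarrow> v \<in> {0..1} \<Longrightarrow> u < v \<Longrightarrow> h u < h v"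
  using hh by (auto simp: HH_def strict_mono_on_def)

lemma u01: "z \<in> {c..d} \<Longrightarrow> (z - c) / (d - c) \<in> {0..1}"
  using cd by (auto simp: field_simps)

lemma glue_low: "z \<le> c \<Longrightarrow> glue c d h z = z"
  using hh cd by (auto simp: glue_def HH_def)

lemma glue_high: "d \<le> z \<Longrightarrow> glue c d h z = z"
  using hh cd by (auto simp: glue_def HH_def)

lemma glue_out: "z \<notin> {c<..<d} \<Longrightarrow> glue c d h z = z"
  using glue_low glue_high by force

lemma glue_mid: "z \<in> {c..d} \<Longrightarrow> glue c d h z = c + (d - c) * h ((z - c) / (d - c))"
  by (simp add: glue_def)

lemma glue_mid_range: "z \<in> {c..d} \<Longrightarrow> glue c d h z \<in> {c..d}"
proof -
  assume z: "z \<in> {c..d}"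
  have "h ((z - c) / (d - c)) \<in> {0..1}" using h01 u01 z by blast
  hence "0 \<le> (d - c) * h ((z - c) / (d - c))" "(d - c) * h ((z - c) / (d - c)) \<le> d - c"
    using cd by (auto simp: mult_le_cancel_left1)
  thus ?thesis using glue_mid[OF z] by simp
qed

lemma glue_mid_strict: "z1 \<in> {c..d} \<Longrightarrow> z2 \<in> {c..d} \<Longrightarrow> z1 < z2 \<Longrightarrow> glue c d h z1 < glue c d h z2"
proof -
  assume z: "z1 \<in> {c..d}" "z2 \<in> {c..d}" "z1 < z2"
  have "(z1 - c) / (d - c) < (z2 - c) / (d - c)" using z cd by (simp add: divide_strict_right_mono)
  hence "h ((z1 - c) / (d - c)) < h ((z2 - c) / (d - c))" using h_strict u01 z by blast
  hence "(d - c) * h ((z1 - c) / (d - c)) < (d - c) * h ((z2 - c) / (d - c))" using cd by simp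
  thus ?thesis using glue_mid z by simp
qed

lemma glue_open_range: "z \<in> {c<..<d} \<Longrightarrow> glue c d h z \<in> {c<..<d}"
proof -
  assume z: "z \<in> {c<..<d}"
  have "glue c d h c < glue c d h z" "glue c d h z < glue c d h d"
    using glue_mid_strict[of c z] glue_mid_strict[of z d] z cd by auto
  thus ?thesis using glue_low[of c] glue_high[of d] by simp
qed

lemma glue_cont: "continuous_on {0..1} (glue c d h)"
proof -
  have eq: "{0..1} = {0..c} \<union> {c..d} \<union> {d..(1::real)}" using cd by auto
  have c1: "continuous_on {0..c} (glue c d h)"
    by (rule continuous_on_eq[of _ "\<lambda>z. z"]) (auto simp: glue_low)
  have c3: "continuous_on {d..1} (glue c d h)"
    by (rule continuous_on_eq[of _ "\<lambda>z. z"]) (auto simp: glue_high)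
  have c2: "continuous_on {c..d} (glue c d h)"
  proof (rule continuous_on_eq[of _ "\<lambda>z. c + (d - c) * h ((z - c) / (d - c))"])
    have "continuous_on {c..d} (\<lambda>z. h ((z - c) / (d - c)))"
    proof (rule continuous_on_compose2[of "{0..1}" h])
      show "continuous_on {0..1} h" using hh by (simp add: HH_def)
      show "continuous_on {c..d} (\<lambda>z. (z - c) / (d - c))" using cd by (intro continuous_intros) auto
      show "(\<lambda>z. (z - c) / (d - c)) ` {c..d} \<subseteq> {0..1}" using u01 by blast
    qed
    thus "continuous_on {c..d} (\<lambda>z. c + (d - c) * h ((z - c) / (d - c)))"
      by (intro continuous_intros)
    show "\<And>x. x \<in> {c..d} \<Longrightarrow> c + (d - c) * h ((x - c) / (d - c)) = glue c d h x"
      using glue_mid by simp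
  qed
  show ?thesis unfolding eq
    by (intro continuous_on_closed_Un c1 c2 c3) auto
qed

lemma glue_strict: "strict_mono_on {0..1} (glue c d h)"
proof (rule strict_mono_onI)
  fix z1 z2 :: real assume z: "z1 \<in> {0..1}" "z2 \<in> {0..1}" "z1 < z2"
  show "glue c d h z1 < glue c d h z2"
  proof (cases "z2 \<le> c")
    case True thus ?thesis using glue_low[of z1] glue_low[of z2] z by simp
  next
    case c2: False
    show ?thesis
    proof (cases "d \<le> z1")
      case True thus ?thesis using glue_high[of z1] glue_high[of z2] z by simp
    next
      case d1: False
      show ?thesis
      proof (cases "z1 < c")
        case z1c: True
        show ?thesis
        proof (cases "z2 \<le> d")
          case True
          hence "glue c d h z2 \<in> {c..d}" using glue_mid_range c2 by simp
          thus ?thesis using glue_low[of z1] z1c by simp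
        next
          case False thus ?thesis using glue_low[of z1] glue_high[of z2] z1c z by simp
        qed
      next
        case z1c: False
        show ?thesis
        proof (cases "z2 \<le> d")
          case True thus ?thesis using glue_mid_strict[of z1 z2] z1c d1 c2 z by simp
        next
          case False
          have "glue c d h z1 \<in> {c..d}" using glue_mid_range z1c d1 by simp
          thus ?thesis using glue_high[of z2] False by simp
        qed
      qed
    qed
  qed
qed

lemma glue_image: "glue c d h ` {0..1} = {0..1}"
proof
  show "glue c d h ` {0..1} \<subseteq> {0..1}"
  proof
    fix y assume "y \<in> glue c d h ` {0..1}"
    then obtain z where z: "z \<in> {0..1}" "y = glue c d h z" by blast
    show "y \<in> {0..1}"
    proof (cases "z \<in> {c..d}")
      case True thus ?thesis using glue_mid_range[OF True] z cd by auto
    next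
      case False thus ?thesis using glue_out[of z] z by auto
    qed
  qed
  show "{0..1} \<subseteq> glue c d h ` {0..1}"
  proof
    fix y :: real assume y: "y \<in> {0..1}"
    show "y \<in> glue c d h ` {0..1}"
    proof (cases "y \<in> {c..d}")
      case False
      hence "glue c d h y = y" using glue_out[of y] by auto
      thus ?thesis using y by (metis image_eqI)
    next
      case True
      have "(y - c) / (d - c) \<in> {0..1}" using u01 True by blast
      then obtain u where u: "u \<in> {0..1}" "h u = (y - c) / (d - c)"
        using hh unfolding HH_def by (metis imageE)
      define z where "z = c + (d - c) * u"
      have "(d - c) * u \<le> (d - c) * 1" using u cd by (intro mult_left_mono) auto
      moreover have "0 \<le> (d - c) * u" using u cd by simp
      ultimately have zr: "z \<in> {c..d}" by (simp add: z_def)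
      have "(z - c) / (d - c) = u" using cd by (simp add: z_def)
      hence "glue c d h z = y" using glue_mid[OF zr] u cd by simp
      moreover have "z \<in> {0..1}" using zr cd by auto
      ultimately show ?thesis by (metis image_eqI)
    qed
  qed
qed

lemma glue_PhiC:
  assumes C: "C \<inter> {c<..<d} = {}" and D: "\<And>z. z \<in> {c<..<d} \<Longrightarrow> glue c d h z \<in> D \<longleftrightarrow> z \<in> D"
  shows "PhiC C D (glue c d h)"
  unfolding PhiC_def
proof (intro conjI glue_cont glue_strict glue_image ballI)
  fix x assume "x \<in> C" thus "glue c d h x = x" using C glue_out by blast
next
  fix x :: real assume "x \<in> {0..1}"
  show "glue c d h x \<in> D \<longleftrightarrow> x \<in> D"
  proof (cases "x \<in> {c<..<d}")
    case True thus ?thesis using D by blast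
  next
    case False thus ?thesis using glue_out by simp
  qed
qed

end

lemma bump_exists:
  assumes cd: "0 \<le> c" "d \<le> 1" and x: "x \<in> {c<..<d}" and y: "y \<in> {c<..<d}"
    and C: "C \<inter> {c<..<d} = {}" and D: "D \<inter> {c<..<d} = {}"
  shows "\<exists>\<phi>. PhiC C D \<phi> \<and> \<phi> x = y"
proof -
  have cd': "c < d" using x by simp
  define u where "u = (x - c) / (d - c)"
  define v where "v = (y - c) / (d - c)"
  have u: "u \<in> {0<..<1}" using x cd' by (auto simp: u_def field_simps)
  have v: "v \<in> {0<..<1}" using y cd' by (auto simp: v_def field_simps)
  define l where "l = (v / (1 - v)) / (u / (1 - u))"
  have hit: "mob l u = v" "l > 0" using mob_hit[OF u v] by (simp_all add: l_def)
  interpret glue_loc c d "mob l" using cd cd' HH_mob[OF hit(2)] by unfold_locales auto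
  have "PhiC C D (glue c d (mob l))"
  proof (rule glue_PhiC[OF C])
    fix z assume "z \<in> {c<..<d}"
    thus "glue c d (mob l) z \<in> D \<longleftrightarrow> z \<in> D" using glue_open_range D by blast
  qed
  moreover have "glue c d (mob l) x = y"
  proof -
    have "glue c d (mob l) x = c + (d - c) * mob l u" using glue_mid x by (simp add: u_def)
    also have "\<dots> = y" using hit cd' by (simp add: v_def)
    finally show ?thesis .
  qed
  ultimately show ?thesis by blast
qed


definition Rad :: "(real \<Rightarrow> real) \<Rightarrow> complex \<Rightarrow> complex" where
  "Rad \<phi> z = complex_of_real (\<phi> (cmod z) / cmod z) * z"

definition Fm :: "nat \<Rightarrow> nat \<Rightarrow> (real \<Rightarrow> real) \<Rightarrow> complex \<Rightarrow> complex" where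
  "Fm n j \<phi> z = (if z \<in> star_graph n then om n ^ j * Rad \<phi> z else z)"

lemma Rad_param:
  assumes "\<phi> 0 = 0" "0 \<le> t"
  shows "Rad \<phi> (complex_of_real t * om n ^ k) = complex_of_real (\<phi> t) * om n ^ k"
proof (cases "t = 0")
  case True thus ?thesis using assms by (simp add: Rad_def)
next
  case False
  hence "t > 0" using assms by simp
  thus ?thesis using assms by (simp add: Rad_def)
qed

lemma Fm_param:
  assumes n: "n > 0" and p: "\<phi> 0 = 0" and t: "0 \<le> t" "t \<le> 1"
  shows "Fm n j \<phi> (complex_of_real t * om n ^ k) = complex_of_real (\<phi> t) * om n ^ (j + k)"
proof -
  have "complex_of_real t * om n ^ k \<in> star_graph n" using n t by auto
  thus ?thesis using Rad_param[of \<phi> t n k, OF p t(1)] by (simp add: Fm_def power_add)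
qed

context
  fixes n :: nat and C D :: "real set"
  assumes n: "n > 0" and C0: "0 \<in> C" and C1: "C \<subseteq> {0..1}"
begin

lemma phi0: "PhiC C D \<phi> \<Longrightarrow> \<phi> 0 = 0"
  using C0 by (simp add: PhiC_def)

lemma Fm_in: "PhiC C D \<phi> \<Longrightarrow> z \<in> star_graph n \<Longrightarrow> Fm n j \<phi> z \<in> star_graph n"
proof -
  assume f: "PhiC C D \<phi>" and z: "z \<in> star_graph n"
  obtain t k where t: "0 \<le> t" "t \<le> 1" "z = complex_of_real t * om n ^ k" using z star_param[OF n] by blast
  have "\<phi> t \<in> {0..1}" using PhiC_range[OF f] t by simp
  thus ?thesis using Fm_param[of n \<phi> t j k, OF n phi0[OF f] t(1,2)] t(3) n by auto
qed

lemma Fm_out: "z \<notin> star_graph n \<Longrightarrow> Fm n j \<phi> z = z"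
  by (simp add: Fm_def)

lemma Fm_comp:
  assumes f: "PhiC C D \<phi>" and g: "PhiC C D \<psi>"
  shows "Fm n j \<phi> \<circ> Fm n i \<psi> = Fm n (j + i) (\<phi> \<circ> \<psi>)"
proof
  fix z
  show "(Fm n j \<phi> \<circ> Fm n i \<psi>) z = Fm n (j + i) (\<phi> \<circ> \<psi>) z"
  proof (cases "z \<in> star_graph n")
    case False thus ?thesis by (simp add: Fm_out)
  next
    case True
    obtain t k where t: "0 \<le> t" "t \<le> 1" "z = complex_of_real t * om n ^ k"
      using True star_param[OF n] by blast
    have pt: "\<psi> t \<in> {0..1}" using PhiC_range[OF g] t by simp
    have "(Fm n j \<phi> \<circ> Fm n i \<psi>) z = Fm n j \<phi> (complex_of_real (\<psi> t) * om n ^ (i + k))"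
      using Fm_param[of n \<psi> t i k, OF n phi0[OF g] t(1,2)] t(3) by simp
    also have "\<dots> = complex_of_real (\<phi> (\<psi> t)) * om n ^ (j + (i + k))"
      using Fm_param[of n \<phi> "\<psi> t" j "i + k", OF n phi0[OF f]] pt by simp
    also have "\<dots> = Fm n (j + i) (\<phi> \<circ> \<psi>) z"
      using Fm_param[of n "\<phi> \<circ> \<psi>" t "j + i" k, OF n _ t(1,2)] phi0[OF f] phi0[OF g] t(3)
      by (simp add: add.assoc)
    finally show ?thesis .
  qed
qed

lemma Fm_ident:
  assumes "j mod n = 0"
  shows "z \<in> star_graph n \<Longrightarrow> Fm n j (\<lambda>x. x) z = z"
proof -
  assume z: "z \<in> star_graph n"
  obtain t k where t: "0 \<le> t" "t \<le> 1" "z = complex_of_real t * om n ^ k"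
    using z star_param[OF n] by blast
  have "om n ^ (j + k) = om n ^ k"
  proof -
    have "om n ^ (j + k) = om n ^ ((j + k) mod n)" using om_pow_mod[OF n] .
    also have "(j + k) mod n = k mod n" using assms by (simp add: mod_add_left_eq[symmetric])
    finally show ?thesis using om_pow_mod[OF n, of k] by simp
  qed
  thus ?thesis using Fm_param[of n "\<lambda>x. x" t j k, OF n _ t(1,2)] t(3) by simp
qed

lemma Fm_id_fun: "Fm n 0 (\<lambda>x. x) = (\<lambda>x. x)"
  using Fm_ident[of 0] Fm_out by (auto simp: fun_eq_iff)

lemma Fm_cont:
  assumes f: "PhiC C D \<phi>"
  shows "continuous_on (star_graph n) (Fm n j \<phi>)"
proof -
  have "continuous_on (\<Union>k\<in>{..<n}. arm n k) (Fm n j \<phi>)"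
  proof (rule continuous_on_closed_Union)
    fix k assume k: "k \<in> {..<n}"
    show "closed (arm n k)" by simp
    show "continuous_on (arm n k) (Fm n j \<phi>)"
    proof (rule continuous_on_eq[of _ "\<lambda>z. complex_of_real (\<phi> (cmod z)) * om n ^ (j + k)"])
      have "continuous_on (arm n k) (\<lambda>z. \<phi> (cmod z))"
      proof (rule continuous_on_compose2[of "{0..1}" \<phi>])
        show "continuous_on {0..1} \<phi>" using f by (simp add: PhiC_def)
        show "continuous_on (arm n k) cmod" by (intro continuous_intros)
        show "cmod ` arm n k \<subseteq> {0..1}" by (auto simp: arm_eq)
      qed
      thus "continuous_on (arm n k) (\<lambda>z. complex_of_real (\<phi> (cmod z)) * om n ^ (j + k))"
        by (intro continuous_intros)
    next
      fix z assume "z \<in> arm n k"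
      then obtain t where t: "0 \<le> t" "t \<le> 1" "z = complex_of_real t * om n ^ k" by (auto simp: arm_eq)
      show "complex_of_real (\<phi> (cmod z)) * om n ^ (j + k) = Fm n j \<phi> z"
        using Fm_param[of n \<phi> t j k, OF n phi0[OF f] t(1,2)] t by simp
    qed
  qed simp
  thus ?thesis by (simp add: star_eq)
qed

definition Gr :: "(complex \<Rightarrow> complex) set" where
  "Gr = {Fm n j \<phi> | j \<phi>. PhiC C D \<phi>}"

lemma Fm_homeo:
  assumes f: "PhiC C D \<phi>"
  shows "homeomorphism (star_graph n) (star_graph n) (Fm n j \<phi>) (Fm n ((n - 1) * j) (inv_into {0..1} \<phi>))"
proof -
  let ?g = "inv_into {0..1} \<phi>"
  have g: "PhiC C D ?g" using PhiC_inv[OF f C1] .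
  have m1: "((n - 1) * j + j) mod n = 0"
  proof -
    obtain n' where "n = Suc n'" using n by (cases n) auto
    hence "(n - 1) * j + j = n * j" by simp
    thus ?thesis by simp
  qed
  have m2: "(j + (n - 1) * j) mod n = 0" using m1 by (simp add: add.commute)
  have eq1: "(?g \<circ> \<phi>) x = x" if "x \<in> {0..1}" for x using PhiC_inv_eq[OF f that] by simp
  have eq2: "(\<phi> \<circ> ?g) x = x" if "x \<in> {0..1}" for x using PhiC_inv_eq[OF f that] by simp
  have key: "Fm n a \<psi> z = z" if a1: "a mod n = 0" and a2: "PhiC C D \<psi>" and a3: "\<And>x. x \<in> {0..1} \<Longrightarrow> \<psi> x = x"
    and a4: "z \<in> star_graph n" for a \<psi> z
  proof -
    obtain t k where t: "0 \<le> t" "t \<le> 1" "z = complex_of_real t * om n ^ k"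
      using a4 star_param[OF n] by blast
    have "Fm n a \<psi> z = complex_of_real t * om n ^ (a + k)"
      using Fm_param[of n \<psi> t a k, OF n phi0[OF a2] t(1,2)] t a3 by simp
    also have "\<dots> = Fm n a (\<lambda>x. x) z" using Fm_param[of n "\<lambda>x. x" t a k, OF n _ t(1,2)] t(3) by simp
    also have "\<dots> = z" using Fm_ident[OF a1 a4] .
    finally show ?thesis .
  qed
  show ?thesis
  proof (rule homeomorphismI)
    show "continuous_on (star_graph n) (Fm n j \<phi>)" using Fm_cont[OF f] .
    show "continuous_on (star_graph n) (Fm n ((n - 1) * j) ?g)" using Fm_cont[OF g] .
    show "Fm n j \<phi> ` star_graph n \<subseteq> star_graph n" using Fm_in[OF f] by blast
    show "Fm n ((n - 1) * j) ?g ` star_graph n \<subseteq> star_graph n" using Fm_in[OF g] by blast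
    fix z assume z: "z \<in> star_graph n"
    show "Fm n ((n - 1) * j) ?g (Fm n j \<phi> z) = z"
      using fun_cong[OF Fm_comp[OF g f, of "(n - 1) * j" j], of z]
        key[OF m1 PhiC_comp[OF g f] eq1 z] by (simp add: comp_def)
  next
    fix z assume z: "z \<in> star_graph n"
    show "Fm n j \<phi> (Fm n ((n - 1) * j) ?g z) = z"
      using fun_cong[OF Fm_comp[OF f g, of j "(n - 1) * j"], of z]
        key[OF m2 PhiC_comp[OF f g] eq2 z] by (simp add: comp_def)
  qed
qed

lemma Gr_subgroup: "homeo_subgroup (star_graph n) Gr"
  unfolding homeo_subgroup_def
proof (intro conjI ballI)
  show "Gr \<subseteq> Homeo (star_graph n)"
  proof
    fix f assume "f \<in> Gr"
    then obtain j \<phi> where f: "f = Fm n j \<phi>" "PhiC C D \<phi>" by (auto simp: Gr_def)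
    show "f \<in> Homeo (star_graph n)"
      using Fm_homeo[OF f(2), of j] f(1) by (auto simp: Homeo_def Fm_out)
  qed
  have "Fm n 0 (\<lambda>x. x) \<in> Gr" unfolding Gr_def using PhiC_id by blast
  thus "(\<lambda>x. x) \<in> Gr" by (simp only: Fm_id_fun)
next
  fix f g assume "f \<in> Gr" "g \<in> Gr"
  then obtain j \<phi> i \<psi> where fg: "f = Fm n j \<phi>" "PhiC C D \<phi>" "g = Fm n i \<psi>" "PhiC C D \<psi>"
    by (auto simp: Gr_def)
  have "f \<circ> g = Fm n (j + i) (\<phi> \<circ> \<psi>)" using Fm_comp[OF fg(2,4)] fg(1,3) by simp
  moreover have "PhiC C D (\<phi> \<circ> \<psi>)" using PhiC_comp[OF fg(2,4)] .
  ultimately show "f \<circ> g \<in> Gr" unfolding Gr_def by blast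
next
  fix f assume "f \<in> Gr"
  then obtain j \<phi> where f: "f = Fm n j \<phi>" "PhiC C D \<phi>" by (auto simp: Gr_def)
  let ?g = "Fm n ((n - 1) * j) (inv_into {0..1} \<phi>)"
  have h: "homeomorphism (star_graph n) (star_graph n) f ?g" using Fm_homeo[OF f(2)] f(1) by simp
  have inj: "inj_on f (star_graph n)" using h by (metis homeomorphism_apply1 inj_on_inverseI)
  have "homeo_inv (star_graph n) f = ?g"
  proof
    fix x show "homeo_inv (star_graph n) f x = ?g x"
    proof (cases "x \<in> star_graph n")
      case False thus ?thesis by (simp add: homeo_inv_def Fm_out)
    next
      case True
      have "?g x \<in> star_graph n" using homeomorphism_image2[OF h] True by blast
      moreover have "f (?g x) = x" using homeomorphism_apply2[OF h True] .
      ultimately have "inv_into (star_graph n) f x = ?g x" using inv_into_f_eq[OF inj] by blast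
      thus ?thesis using True by (simp add: homeo_inv_def)
    qed
  qed
  moreover have "?g \<in> Gr" using PhiC_inv[OF f(2) C1] unfolding Gr_def by blast
  ultimately show "homeo_inv (star_graph n) f \<in> Gr" by simp
qed

end


definition inv1 :: "real set \<Rightarrow> real set \<Rightarrow> real set \<Rightarrow> bool" where
  "inv1 C D R \<longleftrightarrow> (\<forall>\<phi>. PhiC C D \<phi> \<longrightarrow> (\<forall>x\<in>R. \<phi> x \<in> R))"

definition good1 :: "real set \<Rightarrow> real set \<Rightarrow> real set \<Rightarrow> bool" where
  "good1 C D R \<longleftrightarrow> closed R \<and> R \<subseteq> {0..1} \<and> R \<noteq> {} \<and> inv1 C D R"

definition chain1 :: "real set \<Rightarrow> real set \<Rightarrow> nat \<Rightarrow> real set \<Rightarrow> bool" where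
  "chain1 C D N S \<longleftrightarrow> (\<exists>R. (\<forall>i\<le>N. good1 C D (R i)) \<and> (\<forall>i<N. R i \<subset> R (Suc i)) \<and> R N = S)"

lemma chain1_start: "good1 C D S \<Longrightarrow> chain1 C D 0 S"
  unfolding chain1_def by (rule exI[of _ "\<lambda>_. S"]) simp

lemma chain1_step:
  assumes c: "chain1 C D N S" and s: "S \<subset> S'" and g: "good1 C D S'"
  shows "chain1 C D (Suc N) S'"
proof -
  obtain R where R: "\<forall>i\<le>N. good1 C D (R i)" "\<forall>i<N. R i \<subset> R (Suc i)" "R N = S"
    using c by (auto simp: chain1_def)
  define R' where "R' = R(Suc N := S')"
  have "\<forall>i\<le>Suc N. good1 C D (R' i)"
    using R(1) g by (auto simp: R'_def le_Suc_eq)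
  moreover have "\<forall>i<Suc N. R' i \<subset> R' (Suc i)"
    using R(2,3) s by (auto simp: R'_def less_Suc_eq)
  moreover have "R' (Suc N) = S'" by (simp add: R'_def)
  ultimately show ?thesis unfolding chain1_def by blast
qed

lemma chain_card_bound:
  fixes R :: "nat \<Rightarrow> 'a set"
  assumes P: "finite P" and cov: "\<And>i. i \<le> N \<Longrightarrow> R i \<subseteq> \<Union>P"
    and blk: "\<And>i B. i \<le> N \<Longrightarrow> B \<in> P \<Longrightarrow> B \<inter> R i \<noteq> {} \<Longrightarrow> B \<subseteq> R i"
    and ch: "\<And>i. i < N \<Longrightarrow> R i \<subset> R (Suc i)" and ne: "R 0 \<noteq> {}"
  shows "Suc N \<le> card P"
proof -
  define S where "S i = {B\<in>P. B \<inter> R i \<noteq> {}}" for i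
  have Ssub: "S i \<subseteq> P" for i by (auto simp: S_def)
  have "i \<le> N \<Longrightarrow> Suc i \<le> card (S i)" for i
  proof (induction i)
    case 0
    obtain x where "x \<in> R 0" using ne by blast
    then obtain B where "B \<in> P" "x \<in> B" using cov[of 0] by blast
    hence "B \<in> S 0" using \<open>x \<in> R 0\<close> by (auto simp: S_def)
    hence "S 0 \<noteq> {}" by blast
    moreover have "finite (S 0)" using finite_subset[OF Ssub P] .
    ultimately show ?case by (simp add: Suc_leI card_gt_0_iff)
  next
    case (Suc i)
    have i: "i < N" using Suc.prems by simp
    have "S i \<subset> S (Suc i)"
    proof
      show "S i \<subseteq> S (Suc i)" using ch[OF i] by (auto simp: S_def)
      obtain x where x: "x \<in> R (Suc i)" "x \<notin> R i" using ch[OF i] by blast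
      then obtain B where B: "B \<in> P" "x \<in> B" using cov[OF Suc.prems] by blast
      have "B \<in> S (Suc i)" using B x by (auto simp: S_def)
      moreover have "B \<notin> S i"
      proof
        assume "B \<in> S i"
        hence "B \<subseteq> R i" using blk[of i B] i B by (auto simp: S_def)
        thus False using B x by blast
      qed
      ultimately show "S i \<noteq> S (Suc i)" by blast
    qed
    hence "card (S i) < card (S (Suc i))"
      using psubset_card_mono finite_subset[OF Ssub P] by blast
    thus ?case using Suc.IH i by simp
  qed
  hence "Suc N \<le> card (S N)" by simp
  moreover have "card (S N) \<le> card P" using card_mono[OF P Ssub] .
  ultimately show ?thesis by simp
qed

definition lift :: "nat \<Rightarrow> real set \<Rightarrow> complex set" where
  "lift n R = {z \<in> star_graph n. cmod z \<in> R}"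

context
  fixes n :: nat and C D :: "real set"
  assumes n: "n > 0" and C0: "0 \<in> C" and C1: "C \<subseteq> {0..1}"
begin

lemma rot_rel:
  assumes Y: "invariant_set (Gr n C D) Y" and y: "y \<in> Y" and yA: "y \<in> star_graph n"
    and z: "z \<in> star_graph n" and e: "cmod z = cmod y"
  shows "z \<in> Y"
proof -
  obtain t k where t: "0 \<le> t" "t \<le> 1" "y = complex_of_real t * om n ^ k" using yA star_param[OF n] by blast
  obtain s k' where s: "0 \<le> s" "s \<le> 1" "z = complex_of_real s * om n ^ k'" using z star_param[OF n] by blast
  have st: "s = t" using e s t by simp
  define j where "j = k' + (n - 1) * k"
  have "Fm n j (\<lambda>x. x) \<in> Gr n C D" using PhiC_id unfolding Gr_def[OF n C0 C1] by blast
  hence "Fm n j (\<lambda>x. x) y \<in> Y" using Y y by (auto simp: invariant_set_def)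
  moreover have "Fm n j (\<lambda>x. x) y = complex_of_real t * om n ^ (j + k)"
    using Fm_param[of n "\<lambda>x. x" t j k, OF n _ t(1,2)] t(3) by simp
  moreover have "om n ^ (j + k) = om n ^ k'"
  proof -
    obtain n' where nn: "n = Suc n'" using n by (cases n) auto
    have "j + k = k' + n * k" using nn by (simp add: j_def)
    hence "om n ^ (j + k) = om n ^ k' * (om n ^ n) ^ k" by (simp add: power_add power_mult)
    thus ?thesis using om_pow_n[OF n] by simp
  qed
  ultimately show ?thesis using s st by simp
qed

lemma lift_cmod:
  assumes Y: "invariant_set (Gr n C D) Y" and YA: "Y \<subseteq> star_graph n"
  shows "Y = lift n (cmod ` Y)"
proof
  show "Y \<subseteq> lift n (cmod ` Y)" using YA by (auto simp: lift_def)
  show "lift n (cmod ` Y) \<subseteq> Y"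
  proof
    fix z assume "z \<in> lift n (cmod ` Y)"
    then obtain y where "z \<in> star_graph n" "y \<in> Y" "cmod z = cmod y" by (auto simp: lift_def)
    thus "z \<in> Y" using rot_rel[OF Y] YA by blast
  qed
qed

lemma cmod_inv:
  assumes Y: "invariant_set (Gr n C D) Y" and YA: "Y \<subseteq> star_graph n"
  shows "inv1 C D (cmod ` Y)" "cmod ` Y \<subseteq> {0..1}" "cmod ` Y \<noteq> {}"
proof -
  show "cmod ` Y \<subseteq> {0..1}"
  proof
    fix r assume "r \<in> cmod ` Y"
    then obtain y where "y \<in> Y" "r = cmod y" by blast
    then obtain t k where t: "0 \<le> t" "t \<le> 1" "y = complex_of_real t * om n ^ k"
      using YA star_param[OF n] by blast
    thus "r \<in> {0..1}" using \<open>r = cmod y\<close> by simp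
  qed
  show "cmod ` Y \<noteq> {}" using Y by (simp add: invariant_set_def)
  show "inv1 C D (cmod ` Y)" unfolding inv1_def
  proof (intro allI impI ballI)
    fix \<phi> r assume f: "PhiC C D \<phi>" and "r \<in> cmod ` Y"
    then obtain y where y: "y \<in> Y" "r = cmod y" by blast
    then obtain t k where t: "0 \<le> t" "t \<le> 1" "y = complex_of_real t * om n ^ k"
      using YA star_param[OF n] by blast
    have "Fm n 0 \<phi> \<in> Gr n C D" using f unfolding Gr_def[OF n C0 C1] by blast
    hence "Fm n 0 \<phi> y \<in> Y" using Y y by (auto simp: invariant_set_def)
    moreover have "Fm n 0 \<phi> y = complex_of_real (\<phi> t) * om n ^ k"
      using Fm_param[of n \<phi> t 0 k, OF n phi0[OF n C0 C1 f] t(1,2)] t(3) by simp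
    moreover have "\<phi> t \<ge> 0" using PhiC_range[OF f] t by simp
    ultimately have "cmod (complex_of_real (\<phi> t) * om n ^ k) \<in> cmod ` Y" by (metis image_eqI)
    thus "\<phi> r \<in> cmod ` Y" using \<open>\<phi> t \<ge> 0\<close> y t by simp
  qed
qed

lemma lift_good:
  assumes g: "good1 C D R"
  shows "lift n R \<subseteq> star_graph n" "closedin (top_of_set (star_graph n)) (lift n R)"
    "invariant_set (Gr n C D) (lift n R)"
proof -
  show "lift n R \<subseteq> star_graph n" by (auto simp: lift_def)
  have "closed (cmod -` R)" using g by (intro continuous_closed_vimage) (auto simp: good1_def intro: continuous_intros)
  moreover have "lift n R = star_graph n \<inter> cmod -` R" by (auto simp: lift_def)
  ultimately show "closedin (top_of_set (star_graph n)) (lift n R)" by (simp add: closedin_closed_Int)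
  show "invariant_set (Gr n C D) (lift n R)" unfolding invariant_set_def
  proof (intro conjI ballI)
    obtain r where r: "r \<in> R" using g by (auto simp: good1_def)
    hence "r \<in> {0..1}" using g by (auto simp: good1_def)
    hence "complex_of_real r * om n ^ 0 \<in> star_graph n" using param_in[OF n, of r 0] by simp
    hence "complex_of_real r * om n ^ 0 \<in> lift n R" using r \<open>r \<in> {0..1}\<close> by (simp add: lift_def)
    thus "lift n R \<noteq> {}" by blast
  next
    fix f z assume f: "f \<in> Gr n C D" and z: "z \<in> lift n R"
    then obtain j \<phi> where fj: "f = Fm n j \<phi>" "PhiC C D \<phi>" by (auto simp: Gr_def[OF n C0 C1])
    obtain t k where t: "0 \<le> t" "t \<le> 1" "z = complex_of_real t * om n ^ k"
      using z star_param[OF n] by (auto simp: lift_def)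
    have tR: "t \<in> R" using z t by (simp add: lift_def)
    have "\<phi> t \<in> R" using g fj(2) tR by (auto simp: good1_def inv1_def)
    moreover have "\<phi> t \<in> {0..1}" using PhiC_range[OF fj(2)] t by simp
    moreover have "f z = complex_of_real (\<phi> t) * om n ^ (j + k)"
      using Fm_param[of n \<phi> t j k, OF n phi0[OF n C0 C1 fj(2)] t(1,2)] t(3) fj(1) by simp
    moreover have "complex_of_real (\<phi> t) * om n ^ (j + k) \<in> star_graph n"
      using param_in[OF n, of "\<phi> t" "j + k"] \<open>\<phi> t \<in> {0..1}\<close> by simp
    ultimately show "f z \<in> lift n R" by (simp add: lift_def)
  qed
qed

lemma lift_psubset:
  assumes "R' \<subseteq> {0..1}" "R \<subset> R'"
  shows "lift n R \<subset> lift n R'"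
proof -
  obtain r where r: "r \<in> R'" "r \<notin> R" using assms by blast
  hence "r \<in> {0..1}" using assms by blast
  hence "complex_of_real r * om n ^ 0 \<in> star_graph n" using param_in[OF n, of r 0] by simp
  hence "complex_of_real r \<in> lift n R' - lift n R" using r \<open>r \<in> {0..1}\<close> by (auto simp: lift_def)
  moreover have "lift n R \<subseteq> lift n R'" using assms by (auto simp: lift_def)
  ultimately show ?thesis by blast
qed

lemma lift_all: "lift n {0..1} = star_graph n"
proof -
  have "z \<in> star_graph n \<Longrightarrow> cmod z \<in> {0..1}" for z
  proof -
    assume "z \<in> star_graph n"
    then obtain t k where t: "0 \<le> t" "t \<le> 1" "z = complex_of_real t * om n ^ k" using star_param[OF n] by blast
    thus ?thesis by simp
  qed
  thus ?thesis by (auto simp: lift_def)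
qed

lemma chain_lower:
  assumes "chain1 C D N {0..1}"
  shows "chainP (star_graph n) (Gr n C D) N"
proof -
  obtain R where R: "\<forall>i\<le>N. good1 C D (R i)" "\<forall>i<N. R i \<subset> R (Suc i)" "R N = {0..1}"
    using assms by (auto simp: chain1_def)
  show ?thesis unfolding chainP_def
  proof (intro exI[of _ "\<lambda>i. lift n (R i)"] conjI allI impI)
    fix i assume "i \<le> N"
    hence g: "good1 C D (R i)" using R(1) by auto
    show "lift n (R i) \<subseteq> star_graph n" "closedin (top_of_set (star_graph n)) (lift n (R i))"
      "invariant_set (Gr n C D) (lift n (R i))" using lift_good[OF g] by auto
  next
    fix i assume i: "i < N"
    have "R (Suc i) \<subseteq> {0..1}" using R(1) i by (auto simp: good1_def)
    moreover have "R i \<subset> R (Suc i)" using R(2) i by blast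
    ultimately show "lift n (R i) \<subset> lift n (R (Suc i))" by (rule lift_psubset)
  next
    show "lift n (R N) = star_graph n" using R(3) lift_all by simp
  qed
qed

lemma chain_upper:
  assumes "chainP (star_graph n) (Gr n C D) N"
  shows "\<exists>R. (\<forall>i\<le>N. R i \<subseteq> {0..1} \<and> inv1 C D (R i)) \<and> (\<forall>i<N. R i \<subset> R (Suc i)) \<and> R 0 \<noteq> {}"
proof -
  obtain Y where Y0: "\<forall>i\<le>N. Y i \<subseteq> star_graph n \<and> closedin (top_of_set (star_graph n)) (Y i) \<and> invariant_set (Gr n C D) (Y i)"
    "\<forall>i<N. Y i \<subset> Y (Suc i)"
    using assms unfolding chainP_def by blast
  have Y: "\<forall>i\<le>N. Y i \<subseteq> star_graph n \<and> invariant_set (Gr n C D) (Y i)" "\<forall>i<N. Y i \<subset> Y (Suc i)"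
    using Y0 by auto
  show ?thesis
  proof (intro exI[of _ "\<lambda>i. cmod ` Y i"] conjI allI impI)
    fix i assume i: "i \<le> N"
    have a: "invariant_set (Gr n C D) (Y i)" "Y i \<subseteq> star_graph n" using Y(1) i by auto
    show "cmod ` Y i \<subseteq> {0..1}" "inv1 C D (cmod ` Y i)" using cmod_inv[OF a] by auto
  next
    fix i assume i: "i < N"
    have a: "invariant_set (Gr n C D) (Y i)" "Y i \<subseteq> star_graph n" using Y(1) i by auto
    have b: "invariant_set (Gr n C D) (Y (Suc i))" "Y (Suc i) \<subseteq> star_graph n" using Y(1) i by auto
    have e1: "Y i = lift n (cmod ` Y i)" using lift_cmod[OF a] .
    have e2: "Y (Suc i) = lift n (cmod ` Y (Suc i))" using lift_cmod[OF b] .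
    have "cmod ` Y i \<subseteq> cmod ` Y (Suc i)" using Y(2) i by blast
    moreover have "cmod ` Y i \<noteq> cmod ` Y (Suc i)"
    proof
      assume "cmod ` Y i = cmod ` Y (Suc i)"
      hence "Y i = Y (Suc i)" using e1 e2 by simp
      moreover have "Y i \<subset> Y (Suc i)" using Y(2) i by blast
      ultimately show False by simp
    qed
    ultimately show "cmod ` Y i \<subset> cmod ` Y (Suc i)" by blast
  next
    have a: "invariant_set (Gr n C D) (Y 0)" "Y 0 \<subseteq> star_graph n" using Y(1) by auto
    show "cmod ` Y 0 \<noteq> {}" using cmod_inv[OF a] by auto
  qed
qed

end


definition Cset :: "nat \<Rightarrow> real set" where "Cset m = (\<lambda>i. real i / real m) ` {..m}"
definition ell :: "real \<Rightarrow> real" where "ell u = ln (u / (1 - u))"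
definition sig :: "real \<Rightarrow> real" where "sig w = exp w / (1 + exp w)"
definition Dset :: "nat \<Rightarrow> bool \<Rightarrow> real set" where
  "Dset m b = (if b then {x. 0 < x \<and> x < 1 / real m \<and> ell (real m * x) \<in> \<int>} else {})"

lemma sig_range: "sig w \<in> {0<..<1}"
proof -
  have e: "exp w > 0" by simp
  have e1: "1 + exp w > 0" using e by linarith
  have "exp w / (1 + exp w) > 0" using e e1 by (rule divide_pos_pos)
  moreover have "exp w / (1 + exp w) < 1" using e1 by (simp add: divide_less_eq)
  ultimately show ?thesis by (simp add: sig_def)
qed

lemma ell_sig: "ell (sig w) = w"
proof -
  have e: "exp w > 0" by simp
  have e0: "1 + exp w > 0" using e by linarith
  hence e1: "1 + exp w \<noteq> 0" by simp
  have "sig w + 1 / (1 + exp w) = (exp w + 1) / (1 + exp w)" by (simp add: sig_def add_divide_distrib)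
  also have "\<dots> = 1" using e1 by (simp add: add.commute)
  finally have "1 - sig w = 1 / (1 + exp w)" by linarith
  hence "sig w / (1 - sig w) = exp w" using e1 by (simp add: sig_def)
  thus ?thesis by (simp add: ell_def)
qed

lemma odds_strict: "(u::real) \<in> {0<..<1} \<Longrightarrow> v \<in> {0<..<1} \<Longrightarrow> u < v \<Longrightarrow> u / (1 - u) < v / (1 - v)"
proof -
  assume u: "u \<in> {0<..<1}" and v: "v \<in> {0<..<1}" and uv: "u < v"
  have "1 - u > 0" "1 - v > 0" using u v by auto
  moreover have "u * (1 - v) < v * (1 - u)" using uv by (simp add: algebra_simps)
  ultimately show ?thesis by (rule frac_lt)
qed

lemma odds_pos: "(u::real) \<in> {0<..<1} \<Longrightarrow> u / (1 - u) > 0"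
  by simp

lemma ell_strict: "u \<in> {0<..<1} \<Longrightarrow> v \<in> {0<..<1} \<Longrightarrow> u < v \<Longrightarrow> ell u < ell v"
  unfolding ell_def using odds_strict odds_pos by (simp add: ln_less_cancel_iff)

lemma ell_less_iff: "u \<in> {0<..<1} \<Longrightarrow> v \<in> {0<..<1} \<Longrightarrow> ell u < ell v \<longleftrightarrow> u < v"
  using ell_strict by (metis not_less_iff_gr_or_eq order_less_irrefl)

lemma sig_strict: "a < b \<Longrightarrow> sig a < sig b"
  using ell_less_iff[OF sig_range sig_range, of a b] by (simp add: ell_sig)

lemma ell_mob:
  assumes l: "l > 0" and u: "u \<in> {0<..<1}"
  shows "ell (mob l u) = ln l + ell u"
proof -
  have "mob l u / (1 - mob l u) = l * (u / (1 - u))" using mob_odds[OF l] u by simp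
  moreover have "u / (1 - u) > 0" using u by auto
  moreover have "ln (l * (u / (1 - u))) = ln l + ln (u / (1 - u))"
    using l \<open>u / (1 - u) > 0\<close> by (rule ln_mult_pos)
  ultimately show ?thesis by (simp add: ell_def)
qed

lemma Ints_add_iff: "a \<in> \<int> \<Longrightarrow> (a + x \<in> \<int>) \<longleftrightarrow> (x \<in> (\<int> :: real set))"
proof
  assume "a \<in> \<int>" "a + x \<in> \<int>"
  hence "(a + x) - a \<in> \<int>" by (intro Ints_diff)
  thus "x \<in> \<int>" by simp
next
  assume "a \<in> \<int>" "x \<in> \<int>" thus "a + x \<in> \<int>" by (intro Ints_add)
qed

context
  fixes m :: nat
  assumes m: "m \<ge> 1"
begin

lemma mpos: "real m > 0" using m by simp

lemma Cset_sub: "Cset m \<subseteq> {0..1}"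
  using mpos by (auto simp: Cset_def field_simps)

lemma Cset_0: "0 \<in> Cset m"
  by (auto simp: Cset_def image_iff intro!: bexI[of _ 0])

lemma Cset_1: "1 \<in> Cset m"
  using mpos by (auto simp: Cset_def image_iff intro!: bexI[of _ m])

lemma Cset_fin: "finite (Cset m)" by (simp add: Cset_def)

lemma Cset_gap: "Cset m \<inter> {real i / real m <..< real (Suc i) / real m} = {}"
proof -
  { fix j assume "real i / real m < real j / real m" "real j / real m < real (Suc i) / real m"
    hence "real i < real j" "real j < real (Suc i)" using mpos by (simp_all add: divide_less_cancel)
    hence "i < j" "j < Suc i" by simp_all
    hence False by simp }
  thus ?thesis by (auto simp: Cset_def)
qed

lemma Cset_gap0: "Cset m \<inter> {0<..<1 / real m} = {}"
  using Cset_gap[of 0] by simp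

lemma Dset_sub: "Dset m b \<subseteq> {0<..<1 / real m}"
  by (auto simp: Dset_def split: if_splits)

lemma scale01: "x \<in> {0<..<1 / real m} \<Longrightarrow> real m * x \<in> {0<..<1}"
  using mpos by (auto simp: field_simps)

lemma glue_scaled:
  assumes hh: "HH h" and x: "x \<in> {0..1 / real m}"
  shows "glue 0 (1 / real m) h x = h (real m * x) / real m"
proof -
  interpret glue_loc 0 "1 / real m" h using mpos m hh by unfold_locales auto
  show ?thesis using glue_mid[of x] x mpos by (simp add: field_simps)
qed

lemma shift_PhiC:
  assumes l: "l > 0" and lZ: "ln l \<in> \<int>"
  shows "PhiC (Cset m) (Dset m b) (glue 0 (1 / real m) (mob l))"
proof -
  interpret glue_loc 0 "1 / real m" "mob l" using mpos m HH_mob[OF l] by unfold_locales auto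
  show ?thesis
  proof (rule glue_PhiC[OF Cset_gap0])
    fix z assume z: "z \<in> {0<..<1 / real m}"
    have gz: "glue 0 (1 / real m) (mob l) z \<in> {0<..<1 / real m}" using glue_open_range z by simp
    have e: "real m * glue 0 (1 / real m) (mob l) z = mob l (real m * z)"
      using glue_scaled[OF HH_mob[OF l], of z] z mpos by simp
    have "ell (mob l (real m * z)) = ln l + ell (real m * z)" using ell_mob[OF l scale01[OF z]] .
    hence "ell (real m * glue 0 (1 / real m) (mob l) z) \<in> \<int> \<longleftrightarrow> ell (real m * z) \<in> \<int>"
      using e Ints_add_iff[OF lZ] by simp
    thus "glue 0 (1 / real m) (mob l) z \<in> Dset m b \<longleftrightarrow> z \<in> Dset m b"
      using gz z by (simp add: Dset_def)
  qed
qed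

lemma trans_D:
  assumes x: "x \<in> Dset m b" and y: "y \<in> Dset m b"
  shows "\<exists>\<phi>. PhiC (Cset m) (Dset m b) \<phi> \<and> \<phi> x = y"
proof -
  have xr: "x \<in> {0<..<1 / real m}" and yr: "y \<in> {0<..<1 / real m}" using x y Dset_sub[of b] by blast+
  define u where "u = real m * x"
  define v where "v = real m * y"
  have u: "u \<in> {0<..<1}" and v: "v \<in> {0<..<1}" using scale01 xr yr by (auto simp: u_def v_def)
  define l where "l = (v / (1 - v)) / (u / (1 - u))"
  have hit: "mob l u = v" "l > 0" using mob_hit[OF u v] by (simp_all add: l_def)
  have "ln l = ln (v / (1 - v)) - ln (u / (1 - u))"
    unfolding l_def by (rule ln_divide_pos) (use u v in simp_all)
  hence "ln l = ell v - ell u" by (simp add: ell_def)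
  moreover have "ell u \<in> \<int>" "ell v \<in> \<int>" using x y by (auto simp: Dset_def u_def v_def split: if_splits)
  ultimately have lZ: "ln l \<in> \<int>" by (simp add: Ints_diff)
  have "glue 0 (1 / real m) (mob l) x = mob l u / real m"
    using glue_scaled[OF HH_mob[OF hit(2)], of x] xr by (simp add: u_def)
  also have "\<dots> = y" using hit mpos by (simp add: v_def)
  finally show ?thesis using shift_PhiC[OF hit(2) lZ] by blast
qed

lemma not_Ints_between: "of_int a < r \<Longrightarrow> r < of_int a + 1 \<Longrightarrow> (r::real) \<notin> \<int>"
proof
  assume a: "of_int a < r" "r < of_int a + 1" and "r \<in> \<int>"
  then obtain k where "r = of_int k" by (auto elim: Ints_cases)
  thus False using a by simp
qed

lemma trans_gap:
  assumes x: "x \<in> {0<..<1 / real m} - Dset m True" and y: "y \<in> {0<..<1 / real m} - Dset m True"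
  shows "\<exists>\<phi>. PhiC (Cset m) (Dset m True) \<phi> \<and> \<phi> x = y"
proof -
  have xr: "x \<in> {0<..<1 / real m}" and yr: "y \<in> {0<..<1 / real m}" using x y by auto
  define u where "u = real m * x"
  define v where "v = real m * y"
  have u: "u \<in> {0<..<1}" and v: "v \<in> {0<..<1}" using scale01 xr yr by (auto simp: u_def v_def)
  have uZ: "ell u \<notin> \<int>" and vZ: "ell v \<notin> \<int>" using x y xr yr by (auto simp: Dset_def u_def v_def)
  define a where "a = \<lfloor>ell u\<rfloor>"
  define b where "b = \<lfloor>ell v\<rfloor>"
  have a: "of_int a < ell u" "ell u < of_int a + 1"
  proof -
    have "of_int a \<le> ell u" by (simp add: a_def)
    moreover have "of_int a \<noteq> ell u"
    proof
      assume "of_int a = ell u"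
      hence "ell u \<in> \<int>" by (metis Ints_of_int)
      thus False using uZ by simp
    qed
    ultimately show "of_int a < ell u" by simp
    show "ell u < of_int a + 1" by (simp add: a_def)
  qed
  have b: "of_int b < ell v" "ell v < of_int b + 1"
  proof -
    have "of_int b \<le> ell v" by (simp add: b_def)
    moreover have "of_int b \<noteq> ell v"
    proof
      assume "of_int b = ell v"
      hence "ell v \<in> \<int>" by (metis Ints_of_int)
      thus False using vZ by simp
    qed
    ultimately show "of_int b < ell v" by simp
    show "ell v < of_int b + 1" by (simp add: b_def)
  qed
  \<comment> \<open>first step: shift\<close>
  define l :: real where "l = exp (of_int (b - a))"
  have l: "l > 0" "ln l \<in> \<int>" by (simp_all add: l_def)
  define \<phi>1 where "\<phi>1 = glue 0 (1 / real m) (mob l)"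
  have p1: "PhiC (Cset m) (Dset m True) \<phi>1" using shift_PhiC[OF l] by (simp add: \<phi>1_def)
  define x' where "x' = \<phi>1 x"
  have x'e: "x' = mob l u / real m"
    using glue_scaled[OF HH_mob[OF l(1)], of x] xr by (simp add: x'_def \<phi>1_def u_def)
  have mu: "mob l u \<in> {0<..<1}"
  proof -
    have "mob l 0 < mob l u" using mob_strict[OF l(1), of 0 u] u by simp
    moreover have "mob l u < mob l 1" using mob_strict[OF l(1), of u 1] u by simp
    ultimately have "mob l 0 < mob l u" "mob l u < mob l 1" by blast+
    thus ?thesis using l by simp
  qed
  have ellx': "ell (mob l u) = ell u + of_int (b - a)" using ell_mob[OF l(1) u] by (simp add: l_def)
  \<comment> \<open>second step: bump inside the gap\<close>
  define c where "c = sig (of_int b) / real m"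
  define d where "d = sig (of_int b + 1) / real m"
  have gap: "z \<in> {c<..<d} \<longleftrightarrow> of_int b < ell (real m * z) \<and> ell (real m * z) < of_int b + 1"
    if z: "z \<in> {0<..<1 / real m}" for z
  proof -
    have zu: "real m * z \<in> {0<..<1}" using scale01[OF z] .
    have "z \<in> {c<..<d} \<longleftrightarrow> sig (of_int b) < real m * z \<and> real m * z < sig (of_int b + 1)"
      using mpos by (auto simp: c_def d_def field_simps)
    also have "\<dots> \<longleftrightarrow> ell (sig (of_int b)) < ell (real m * z) \<and> ell (real m * z) < ell (sig (of_int b + 1))"
      using ell_less_iff[OF sig_range zu] ell_less_iff[OF zu sig_range] by simp
    finally show ?thesis by (simp add: ell_sig)
  qed
  have cd: "0 \<le> c" "d \<le> 1 / real m" "c < d"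
    using sig_range[of "of_int b"] sig_range[of "of_int b + 1"] mpos sig_strict[of "of_int b" "of_int b + 1"]
    by (auto simp: c_def d_def divide_right_mono divide_strict_right_mono)
  have cdsub: "{c<..<d} \<subseteq> {0<..<1 / real m}"
  proof -
    have "d \<le> 1 / real m" using cd by simp
    thus ?thesis using cd by auto
  qed
  have x'r: "x' \<in> {0<..<1 / real m}" using mu mpos by (auto simp: x'e field_simps)
  have x'g: "x' \<in> {c<..<d}"
  proof -
    have "real m * x' = mob l u" using mpos by (simp add: x'e)
    thus ?thesis using gap[OF x'r] ellx' a by simp
  qed
  have yg: "y \<in> {c<..<d}" using gap[OF yr] b by (simp add: v_def)
  have Cg: "Cset m \<inter> {c<..<d} = {}" using Cset_gap0 cdsub by blast
  have Dg: "Dset m True \<inter> {c<..<d} = {}"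
  proof -
    { fix z assume z: "z \<in> Dset m True" "z \<in> {c<..<d}"
      hence zr: "z \<in> {0<..<1 / real m}" using cdsub by blast
      have "ell (real m * z) \<in> \<int>" using z by (simp add: Dset_def)
      moreover have "ell (real m * z) \<notin> \<int>" using gap[OF zr] z(2) not_Ints_between by blast
      ultimately have False by simp }
    thus ?thesis by blast
  qed
  have "1 / real m \<le> 1" using m by simp
  hence d1: "d \<le> 1" using cd by linarith
  obtain \<phi>2 where p2: "PhiC (Cset m) (Dset m True) \<phi>2" "\<phi>2 x' = y"
    using bump_exists[OF cd(1) d1 x'g yg Cg Dg] by blast
  have "PhiC (Cset m) (Dset m True) (\<phi>2 \<circ> \<phi>1)" using PhiC_comp[OF p2(1) p1] .
  moreover have "(\<phi>2 \<circ> \<phi>1) x = y" using p2(2) by (simp add: x'_def)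
  ultimately show ?thesis by blast
qed

lemma trans_T:
  assumes i: "i < m" "\<not> (b \<and> i = 0)"
    and x: "x \<in> {real i / real m <..< real (Suc i) / real m}" and y: "y \<in> {real i / real m <..< real (Suc i) / real m}"
  shows "\<exists>\<phi>. PhiC (Cset m) (Dset m b) \<phi> \<and> \<phi> x = y"
proof (rule bump_exists[OF _ _ x y Cset_gap])
  show "0 \<le> real i / real m" by simp
  show "real (Suc i) / real m \<le> 1" using i mpos by (simp add: field_simps)
  show "Dset m b \<inter> {real i / real m <..< real (Suc i) / real m} = {}"
  proof (cases b)
    case False thus ?thesis by (simp add: Dset_def)
  next
    case True
    hence "i \<ge> 1" using i by simp
    hence "1 / real m \<le> real i / real m" using mpos by (simp add: divide_right_mono)
    thus ?thesis using Dset_sub[of b] by auto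
  qed
qed

end


definition Pb :: "nat \<Rightarrow> bool \<Rightarrow> real set set" where
  "Pb m b = (\<lambda>c. {c}) ` Cset m
     \<union> (\<lambda>i. {real i / real m <..< real (Suc i) / real m}) ` {i. i < m \<and> \<not> (b \<and> i = 0)}
     \<union> (if b then {Dset m b, {0<..<1 / real m} - Dset m b} else {})"

context
  fixes m :: nat and b :: bool
  assumes m: "m \<ge> 1"
begin

lemma mpos': "real m > 0" using m by simp

lemma Dset_01: "Dset m b' \<subseteq> {0..1}"
proof -
  have "1 / real m \<le> 1" using m by simp
  thus ?thesis using Dset_sub[OF m, of b'] by fastforce
qed

lemma Pb_finite: "finite (Pb m b)"
  by (simp add: Pb_def Cset_def)

lemma Pb_card: "card (Pb m b) \<le> 2 * m + 1 + (if b then 1 else 0)"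
proof -
  let ?A = "(\<lambda>c. {c}) ` Cset m"
  let ?I = "{i. i < m \<and> \<not> (b \<and> i = 0)}"
  let ?B = "(\<lambda>i. {real i / real m <..< real (Suc i) / real m}) ` ?I"
  let ?E = "(if b then {Dset m b, {0<..<1 / real m} - Dset m b} else {})"
  have cA: "card ?A \<le> m + 1"
  proof -
    have "card ?A \<le> card (Cset m)" by (rule card_image_le) (simp add: Cset_def)
    also have "\<dots> \<le> card {..m}" unfolding Cset_def by (rule card_image_le) simp
    finally show ?thesis by simp
  qed
  have cI: "card ?I + (if b then 1 else 0) \<le> m"
  proof (cases b)
    case True
    have "?I \<subseteq> {1..<m}" using True by auto
    hence "card ?I \<le> card {1..<m}" by (intro card_mono) auto
    thus ?thesis using True m by simp
  next
    case False
    hence "?I = {..<m}" by auto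
    thus ?thesis using False by simp
  qed
  have cB: "card ?B \<le> card ?I" by (rule card_image_le) simp
  have cE: "card ?E \<le> (if b then 2 else 0)"
    by (cases b) (auto simp: card_insert_if)
  have "card (Pb m b) \<le> card (?A \<union> ?B) + card ?E" unfolding Pb_def by (rule card_Un_le)
  also have "\<dots> \<le> card ?A + card ?B + card ?E" using card_Un_le[of ?A ?B] by simp
  finally show ?thesis using cA cI cB cE by (cases b) auto
qed

lemma Pb_cover: "{0..1} \<subseteq> \<Union>(Pb m b)"
proof
  fix x :: real assume x: "x \<in> {0..1}"
  define y where "y = real m * x"
  have y: "0 \<le> y" "y \<le> real m" using x mpos' by (auto simp: y_def mult_le_cancel_left1)
  define i where "i = nat \<lfloor>y\<rfloor>"
  have ri: "real i = of_int \<lfloor>y\<rfloor>" using y by (simp add: i_def)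
  have fl: "real i \<le> y" "y < real i + 1" using ri by linarith+
  show "x \<in> \<Union>(Pb m b)"
  proof (cases "real i = y")
    case True
    hence "x = real i / real m" using mpos' by (simp add: y_def field_simps)
    moreover have "i \<le> m" using True y by linarith
    ultimately have "x \<in> Cset m" by (auto simp: Cset_def)
    thus ?thesis by (auto simp: Pb_def)
  next
    case False
    hence lt: "real i < y" using fl by simp
    have im: "i < m"
    proof (rule ccontr)
      assume "\<not> i < m" hence "real m \<le> real i" by simp
      thus False using lt y by linarith
    qed
    have xin: "x \<in> {real i / real m <..< real (Suc i) / real m}"
      using lt fl mpos' by (auto simp: y_def field_simps)
    show ?thesis
    proof (cases "b \<and> i = 0")
      case False
      hence "{real i / real m <..< real (Suc i) / real m} \<in> Pb m b" using im by (auto simp: Pb_def)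
      thus ?thesis using xin by blast
    next
      case True
      hence "x \<in> {0<..<1 / real m}" using xin by simp
      thus ?thesis using True by (cases "x \<in> Dset m b") (auto simp: Pb_def)
    qed
  qed
qed

lemma Pb_block:
  assumes R: "inv1 (Cset m) (Dset m b) R" and B: "B \<in> Pb m b" and ne: "B \<inter> R \<noteq> {}"
  shows "B \<subseteq> R"
proof -
  have trans: "\<forall>x\<in>B. \<forall>y\<in>B. \<exists>\<phi>. PhiC (Cset m) (Dset m b) \<phi> \<and> \<phi> x = y"
  proof -
    consider c where "B = {c}"
      | i where "i < m" "\<not> (b \<and> i = 0)" "B = {real i / real m <..< real (Suc i) / real m}"
      | "b" "B = Dset m b" | "b" "B = {0<..<1 / real m} - Dset m b"
      using B unfolding Pb_def by (auto split: if_splits)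
    thus ?thesis
    proof cases
      case 1 thus ?thesis using PhiC_id by fastforce
    next
      case 2 thus ?thesis using trans_T[OF m 2(1,2)] by simp
    next
      case 3 thus ?thesis using trans_D[OF m] by simp
    next
      case 4 thus ?thesis using trans_gap[OF m] by simp
    qed
  qed
  obtain x where x: "x \<in> B" "x \<in> R" using ne by blast
  show ?thesis
  proof
    fix y assume "y \<in> B"
    then obtain \<phi> where "PhiC (Cset m) (Dset m b) \<phi>" "\<phi> x = y" using trans x by blast
    thus "y \<in> R" using R x by (auto simp: inv1_def)
  qed
qed

lemma upper_bound:
  assumes n: "n > 0" and ch: "chainP (star_graph n) (Gr n (Cset m) (Dset m b)) N"
  shows "N \<le> 2 * m + (if b then 1 else 0)"
proof -
  obtain R where R: "\<forall>i\<le>N. R i \<subseteq> {0..1} \<and> inv1 (Cset m) (Dset m b) (R i)"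
    "\<forall>i<N. R i \<subset> R (Suc i)" "R 0 \<noteq> {}"
    using chain_upper[OF n Cset_0[OF m] Cset_sub[OF m] ch] by blast
  have "Suc N \<le> card (Pb m b)"
  proof (rule chain_card_bound[OF Pb_finite, of N R])
    fix i assume "i \<le> N"
    thus "R i \<subseteq> \<Union>(Pb m b)" using R(1) Pb_cover by blast
  next
    fix i B assume "i \<le> N" "B \<in> Pb m b" "B \<inter> R i \<noteq> {}"
    thus "B \<subseteq> R i" using Pb_block R(1) by blast
  next
    fix i assume "i < N" thus "R i \<subset> R (Suc i)" using R(2) by blast
  next
    show "R 0 \<noteq> {}" using R(3) .
  qed
  thus ?thesis using Pb_card by simp
qed

lemma good_fin: "S \<subseteq> Cset m \<Longrightarrow> S \<noteq> {} \<Longrightarrow> good1 (Cset m) (Dset m b) S"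
proof -
  assume S: "S \<subseteq> Cset m" "S \<noteq> {}"
  have "finite S" using S(1) Cset_fin[OF m] finite_subset by blast
  thus ?thesis using S Cset_sub[OF m] by (auto simp: good1_def inv1_def PhiC_def finite_imp_closed)
qed

lemma good_int:
  assumes c: "c \<in> Cset m"
  shows "good1 (Cset m) (Dset m b) (Cset m \<union> {0..c})"
  unfolding good1_def
proof (intro conjI)
  have c1: "c \<in> {0..1}" using c Cset_sub[OF m] by blast
  show "closed (Cset m \<union> {0..c})" using Cset_fin[OF m] by (simp add: closed_Un finite_imp_closed)
  show "Cset m \<union> {0..c} \<subseteq> {0..1}" using Cset_sub[OF m] c1 by auto
  show "Cset m \<union> {0..c} \<noteq> {}" using c by blast
  show "inv1 (Cset m) (Dset m b) (Cset m \<union> {0..c})" unfolding inv1_def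
  proof (intro allI impI ballI)
    fix \<phi> x assume f: "PhiC (Cset m) (Dset m b) \<phi>" and x: "x \<in> Cset m \<union> {0..c}"
    show "\<phi> x \<in> Cset m \<union> {0..c}"
    proof (cases "x \<in> Cset m")
      case True thus ?thesis using f by (simp add: PhiC_def)
    next
      case False
      hence x0: "x \<in> {0..c}" using x by blast
      hence x1: "x \<in> {0..1}" using c1 by auto
      have "\<phi> x \<le> \<phi> c" using PhiC_mono[OF f x1 c1] x0 by simp
      moreover have "\<phi> c = c" using f c by (simp add: PhiC_def)
      moreover have "\<phi> x \<ge> 0" using PhiC_range[OF f x1] by simp
      ultimately show ?thesis by simp
    qed
  qed
qed

lemma closed_CD: "closed (Cset m \<union> Dset m True)"
proof -
  define f where "f z = ell (real m * z)" for z
  have eq: "- (Cset m \<union> Dset m True) = ((- Cset m) - {0..1 / real m}) \<union> (f -` (- \<int>) \<inter> {0<..<1 / real m})"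
  proof
    show "- (Cset m \<union> Dset m True) \<subseteq> ((- Cset m) - {0..1 / real m}) \<union> (f -` (- \<int>) \<inter> {0<..<1 / real m})"
    proof
      fix x assume x: "x \<in> - (Cset m \<union> Dset m True)"
      show "x \<in> ((- Cset m) - {0..1 / real m}) \<union> (f -` (- \<int>) \<inter> {0<..<1 / real m})"
      proof (cases "x \<in> {0..1 / real m}")
        case False thus ?thesis using x by blast
      next
        case True
        have "x \<noteq> 0" using x Cset_0[OF m] by blast
        moreover have "1 / real m \<in> Cset m" by (auto simp: Cset_def image_iff intro!: bexI[of _ 1] m)
        hence "x \<noteq> 1 / real m" using x by blast
        ultimately have xr: "x \<in> {0<..<1 / real m}" using True by auto
        hence "f x \<notin> \<int>" using x by (auto simp: Dset_def f_def)
        thus ?thesis using xr by blast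
      qed
    qed
  next
    show "((- Cset m) - {0..1 / real m}) \<union> (f -` (- \<int>) \<inter> {0<..<1 / real m}) \<subseteq> - (Cset m \<union> Dset m True)"
    proof
      fix x assume x: "x \<in> ((- Cset m) - {0..1 / real m}) \<union> (f -` (- \<int>) \<inter> {0<..<1 / real m})"
      show "x \<in> - (Cset m \<union> Dset m True)"
      proof (cases "x \<in> {0<..<1 / real m}")
        case True
        hence "x \<notin> Cset m" using Cset_gap0[OF m] by blast
        moreover have "f x \<notin> \<int>" using x True by auto
        hence "x \<notin> Dset m True" by (simp add: Dset_def f_def)
        ultimately show ?thesis by blast
      next
        case False
        hence "x \<notin> Cset m" "x \<notin> {0..1 / real m}" using x by auto
        moreover have "Dset m True \<subseteq> {0..1 / real m}" using Dset_sub[OF m, of True] by auto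
        ultimately show ?thesis by blast
      qed
    qed
  qed
  have o1: "open ((- Cset m) - {0..1 / real m})"
    using Cset_fin[OF m] by (intro open_Diff) (auto simp: finite_imp_closed open_Compl)
  have cont: "continuous_on {0<..<1 / real m} f"
  proof -
    let ?S = "{0<..<1 / real m}"
    have h: "z \<in> ?S \<Longrightarrow> real m * z \<in> {0<..<1}" for z using scale01[OF m] by blast
    have c1: "continuous_on ?S (\<lambda>z. real m * z / (1 - real m * z))"
    proof (rule continuous_on_divide)
      show "continuous_on ?S (\<lambda>z. real m * z)" by (intro continuous_intros)
      show "continuous_on ?S (\<lambda>z. 1 - real m * z)" by (intro continuous_intros)
      show "\<forall>z\<in>?S. 1 - real m * z \<noteq> 0" using h by fastforce
    qed
    have "continuous_on ?S (\<lambda>z. ln (real m * z / (1 - real m * z)))"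
    proof (rule continuous_on_ln[OF c1], rule ballI)
      fix z assume "z \<in> ?S"
      hence "real m * z \<in> {0<..<1}" using h by blast
      hence "real m * z / (1 - real m * z) > 0" by simp
      thus "real m * z / (1 - real m * z) \<noteq> 0" by (metis order_less_irrefl)
    qed
    thus ?thesis unfolding f_def ell_def .
  qed
  have o2: "open (f -` (- \<int>) \<inter> {0<..<1 / real m})"
    using continuous_on_open_vimage[of "{0<..<1 / real m}" f] cont
    by (simp add: open_Compl)
  have "open (- (Cset m \<union> Dset m True))" unfolding eq using o1 o2 by (rule open_Un)
  thus ?thesis by (simp add: closed_def)
qed

lemma good_CD: "good1 (Cset m) (Dset m b) (Cset m \<union> Dset m b)"
  unfolding good1_def
proof (intro conjI)
  show "closed (Cset m \<union> Dset m b)"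
    using closed_CD Cset_fin[OF m] by (cases b) (auto simp: Dset_def finite_imp_closed)
  show "Cset m \<union> Dset m b \<subseteq> {0..1}"
    using Cset_sub[OF m] Dset_01 by blast
  show "Cset m \<union> Dset m b \<noteq> {}" using Cset_0[OF m] by blast
  show "inv1 (Cset m) (Dset m b) (Cset m \<union> Dset m b)" unfolding inv1_def
  proof (intro allI impI ballI)
    fix \<phi> x assume f: "PhiC (Cset m) (Dset m b) \<phi>" and x: "x \<in> Cset m \<union> Dset m b"
    show "\<phi> x \<in> Cset m \<union> Dset m b"
    proof (cases "x \<in> Cset m")
      case True thus ?thesis using f by (simp add: PhiC_def)
    next
      case False
      hence xD: "x \<in> Dset m b" using x by blast
      hence "x \<in> {0..1}" using Dset_01 by blast
      thus ?thesis using f xD by (simp add: PhiC_def)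
    qed
  qed
qed

end


lemma psub_pt: "X \<subseteq> Y \<Longrightarrow> p \<in> Y \<Longrightarrow> p \<notin> X \<Longrightarrow> X \<subset> Y"
  by blast

context
  fixes m :: nat and b :: bool
  assumes m: "m \<ge> 1"
begin

lemma chainA: "i \<le> m \<Longrightarrow> chain1 (Cset m) (Dset m b) i ((\<lambda>j. real j / real m) ` {..i})"
proof (induction i)
  case 0
  have "(\<lambda>j. real j / real m) ` {..0} = {0}" by simp
  moreover have "good1 (Cset m) (Dset m b) {0}" using good_fin[OF m] Cset_0[OF m] by simp
  ultimately show ?case using chain1_start by metis
next
  case (Suc i)
  have IH: "chain1 (Cset m) (Dset m b) i ((\<lambda>j. real j / real m) ` {..i})" using Suc by simp
  have mp: "real m > 0" using m by simp
  have ni: "real (Suc i) / real m \<notin> (\<lambda>j. real j / real m) ` {..i}"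
  proof
    assume "real (Suc i) / real m \<in> (\<lambda>j. real j / real m) ` {..i}"
    then obtain j where j: "j \<le> i" "real (Suc i) / real m = real j / real m" by auto
    hence "real (Suc i) = real j" using mp by (simp add: divide_cancel_right)
    thus False using j(1) by simp
  qed
  have "real (Suc i) / real m \<in> (\<lambda>j. real j / real m) ` {..Suc i}" by blast
  moreover have "(\<lambda>j. real j / real m) ` {..i} \<subseteq> (\<lambda>j. real j / real m) ` {..Suc i}" by auto
  ultimately have "(\<lambda>j. real j / real m) ` {..i} \<subset> (\<lambda>j. real j / real m) ` {..Suc i}"
    using ni by blast
  moreover have "good1 (Cset m) (Dset m b) ((\<lambda>j. real j / real m) ` {..Suc i})"
    using Suc.prems by (intro good_fin[OF m]) (auto simp: Cset_def)
  ultimately show ?case using chain1_step[OF IH] by blast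
qed

lemma chainC: "chain1 (Cset m) (Dset m b) m (Cset m)"
  using chainA[of m] by (simp add: Cset_def)

lemma chainB0: "chain1 (Cset m) (Dset m b) (m + (if b then 1 else 0)) (Cset m \<union> Dset m b)"
proof (cases b)
  case False thus ?thesis using chainC by (simp add: Dset_def)
next
  case True
  have mp: "real m > 0" using m by simp
  define p where "p = 1 / (2 * real m)"
  have pr: "p \<in> {0<..<1 / real m}" using mp by (auto simp: p_def field_simps)
  have "real m * p = 1 / 2" using mp by (simp add: p_def)
  hence "ell (real m * p) = ell (1/2)" by (rule arg_cong)
  also have "ell (1/2) = 0" by (simp add: ell_def)
  finally have "ell (real m * p) = 0" .
  hence pD: "p \<in> Dset m b" using pr True by (simp add: Dset_def)
  have "p \<notin> Cset m" using pr Cset_gap0[OF m] by blast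
  hence ps: "Cset m \<subset> Cset m \<union> Dset m b" using pD by blast
  have "chain1 (Cset m) (Dset m b) (Suc m) (Cset m \<union> Dset m b)"
    by (rule chain1_step[OF chainC ps good_CD[OF m]])
  moreover have "Suc m = m + (if b then 1 else 0)" using True by simp
  ultimately show ?thesis by simp
qed

lemma chainB: "k < m \<Longrightarrow> chain1 (Cset m) (Dset m b) (m + (if b then 1 else 0) + Suc k) (Cset m \<union> {0..real (Suc k) / real m})"
proof (induction k)
  case 0
  have mp: "real m > 0" using m by simp
  define p where "p = sig (1/2) / real m"
  have pr: "p \<in> {0<..<1 / real m}" using sig_range[of "1/2"] mp by (auto simp: p_def divide_strict_right_mono)
  have e: "ell (real m * p) = 1/2" using mp by (simp add: p_def ell_sig)
  have "(1/2::real) \<notin> \<int>" by (rule not_Ints_between[OF m, of 0]) simp_all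
  hence "ell (real m * p) \<notin> \<int>" unfolding e .
  hence pD: "p \<notin> Dset m b" by (simp add: Dset_def)
  have pC: "p \<notin> Cset m" using pr Cset_gap0[OF m] by blast
  have "Dset m b \<subseteq> {0..1 / real m}" using Dset_sub[OF m, of b] by auto
  hence s1: "Cset m \<union> Dset m b \<subseteq> Cset m \<union> {0..real (Suc 0) / real m}" by auto
  have s2: "p \<in> Cset m \<union> {0..real (Suc 0) / real m}" using pr by simp
  have s3: "p \<notin> Cset m \<union> Dset m b" using pC pD by blast
  have "Cset m \<union> Dset m b \<subset> Cset m \<union> {0..real (Suc 0) / real m}" by (rule psub_pt[OF s1 s2 s3])
  moreover have "1 / real m \<in> Cset m" by (auto simp: Cset_def image_iff intro!: bexI[of _ 1] m)
  hence "good1 (Cset m) (Dset m b) (Cset m \<union> {0..real (Suc 0) / real m})" using good_int[OF m] by simp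
  ultimately show ?case using chain1_step[OF chainB0] by simp
next
  case (Suc k)
  have mp: "real m > 0" using m by simp
  have IH: "chain1 (Cset m) (Dset m b) (m + (if b then 1 else 0) + Suc k) (Cset m \<union> {0..real (Suc k) / real m})"
    using Suc by simp
  define p where "p = (real k + 3/2) / real m"
  have pr: "p \<in> {real (Suc k) / real m <..< real (Suc (Suc k)) / real m}"
    using mp by (auto simp: p_def divide_strict_right_mono)
  have pC: "p \<notin> Cset m" using pr Cset_gap[OF m, of "Suc k"] by blast
  have "Cset m \<union> {0..real (Suc k) / real m} \<subset> Cset m \<union> {0..real (Suc (Suc k)) / real m}"
  proof -
    have le: "real (Suc k) / real m \<le> real (Suc (Suc k)) / real m" using mp by (simp add: divide_right_mono)
    have p0: "p \<ge> 0" using mp by (simp add: p_def)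
    have s1: "Cset m \<union> {0..real (Suc k) / real m} \<subseteq> Cset m \<union> {0..real (Suc (Suc k)) / real m}"
      using le by auto
    have s2: "p \<in> Cset m \<union> {0..real (Suc (Suc k)) / real m}" using pr p0 by simp
    have s3: "p \<notin> Cset m \<union> {0..real (Suc k) / real m}" using pr pC by simp
    show ?thesis by (rule psub_pt[OF s1 s2 s3])
  qed
  moreover have "real (Suc (Suc k)) / real m \<in> Cset m"
    using Suc.prems by (auto simp: Cset_def image_iff intro!: bexI[of _ "Suc (Suc k)"])
  hence "good1 (Cset m) (Dset m b) (Cset m \<union> {0..real (Suc (Suc k)) / real m})" using good_int[OF m] by simp
  ultimately show ?case using chain1_step[OF IH] by simp
qed

lemma chain_full: "chain1 (Cset m) (Dset m b) (2 * m + (if b then 1 else 0)) {0..1}"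
proof -
  obtain k where k: "m = Suc k" using m by (cases m) auto
  have km: "k < m" using k by simp
  have c: "chain1 (Cset m) (Dset m b) (m + (if b then 1 else 0) + Suc k) (Cset m \<union> {0..real (Suc k) / real m})"
    by (rule chainB[OF km])
  have e1: "Cset m \<union> {0..real (Suc k) / real m} = {0..1}"
  proof -
    have "real (Suc k) / real m = 1" using k by simp
    thus ?thesis using Cset_sub[OF m] by auto
  qed
  have e2: "m + (if b then 1 else 0) + Suc k = 2 * m + (if b then 1 else 0)" using k by simp
  show ?thesis using c unfolding e1 e2 .
qed

lemma height_Gr:
  assumes n: "n > 0"
  shows "height (star_graph n) (Gr n (Cset m) (Dset m b)) = enat (2 * m + (if b then 1 else 0))"
proof (rule height_eq)
  show "chainP (star_graph n) (Gr n (Cset m) (Dset m b)) (2 * m + (if b then 1 else 0))"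
    by (rule chain_lower[OF n Cset_0[OF m] Cset_sub[OF m] chain_full])
  fix N assume "chainP (star_graph n) (Gr n (Cset m) (Dset m b)) N"
  thus "N \<le> 2 * m + (if b then 1 else 0)" using upper_bound[OF m n] by simp
qed

end

theorem theorem4p2:
  fixes n :: nat
  assumes "n \<ge> 3"
  shows "P_h (star_graph n) = {enat k | k. k \<ge> 2} \<union> {\<infinity>}"
proof
  have n0: "n > 0" using assms by simp
  show "P_h (star_graph n) \<subseteq> {enat k | k. k \<ge> 2} \<union> {\<infinity>}"
  proof
    fix x assume "x \<in> P_h (star_graph n)"
    then obtain G where G: "homeo_subgroup (star_graph n) G" "x = height (star_graph n) G"
      by (auto simp: P_h_def)
    have "enat 2 \<le> x" using height_ge2[OF assms G(1)] G(2) by simp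
    thus "x \<in> {enat k | k. k \<ge> 2} \<union> {\<infinity>}" by (cases x) auto
  qed
  show "{enat k | k. k \<ge> 2} \<union> {\<infinity>} \<subseteq> P_h (star_graph n)"
  proof
    fix x assume "x \<in> {enat k | k. k \<ge> 2} \<union> {\<infinity>}"
    then consider "x = \<infinity>" | k where "k \<ge> 2" "x = enat k" by blast
    thus "x \<in> P_h (star_graph n)"
    proof cases
      case 1
      have "x = height (star_graph n) {\<lambda>x. x}" using 1 trivial_height[OF assms] by simp
      thus ?thesis using trivial_subgroup[of "star_graph n"] unfolding P_h_def by blast
    next
      case 2
      define m where "m = k div 2"
      define b where "b = odd k"
      have m: "m \<ge> 1" using 2 by (simp add: m_def)
      have "2 * m + (if b then 1 else 0) = k" by (simp add: m_def b_def)
      hence "height (star_graph n) (Gr n (Cset m) (Dset m b)) = x"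
        using height_Gr[OF m n0, of b] 2 by simp
      moreover have "homeo_subgroup (star_graph n) (Gr n (Cset m) (Dset m b))"
        by (rule Gr_subgroup[OF n0 Cset_0[OF m] Cset_sub[OF m]])
      ultimately show ?thesis by (auto simp: P_h_def)
    qed
  qed
qed

end
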